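(* Let $\ell\in\mathbb{N}$ and let $s>1$ be real. For $M\geq 1$ let \[ P_{\ell}(s;M):=\sum_{k\in \Omega(\ell):\, k\geq M}\frac{1}{k^{s}}, \] where $\Omega(\ell)$ is the set of positive integers with at most $\ell$ (not necessarily distinct) prime factors. Then there exist constants $C_1,C_2>0$ and $M_0$ such that for every $M\geq M_0$, \[ C_1\,\frac{(\log\log M)^{\ell-1}}{M^{s-1}\log M}\;\leq\; P_{\ell}(s;M)\;\leq\; C_2\,\frac{(\log\log M)^{\ell-1}}{M^{s-1}\log M}. \]
   Context: $\Omega(\ell)$ denotes the set of $\ell$-almost primes: positive integers with at most $\ell$ prime factors counted with multiplicity (e.g. $\Omega(1)$ is the set of primes, and $4,6\in\Omega(2)$). *)

theory Defs
  imports "HOL-Analysis.Analysis" "HOL-Computational_Algebra.Primes"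
begin

definition almost_primes :: "nat \<Rightarrow> nat set" where
  "almost_primes l = {k. k > 0 \<and> size (prime_factorization k) \<le> l}"

definition P_tail :: "nat \<Rightarrow> real \<Rightarrow> real \<Rightarrow> real" where
  "P_tail l s M = (\<Sum>\<^sub>\<infinity> k \<in> {k \<in> almost_primes l. real k \<ge> M}. 1 / (real k powr s))"

end

theory Submission
  imports Defs "HOL-Number_Theory.Number_Theory" "HOL-Real_Asymp.Real_Asymp"
begin


definition primes_le :: "real \<Rightarrow> nat set" where
  "primes_le x = {p::nat. prime p \<and> real p \<le> x}"

definition ppi :: "real \<Rightarrow> real" where
  "ppi x = real (card (primes_le x))"

definition Sp :: "real \<Rightarrow> real" where
  "Sp x = (\<Sum>p\<in>primes_le x. 1 / real p)"

lemma primes_le_subset: "primes_le x \<subseteq> {..nat \<lfloor>x\<rfloor>}"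
  unfolding primes_le_def by (auto simp: le_nat_floor)

lemma finite_primes_le [simp]: "finite (primes_le x)"
  using primes_le_subset finite_subset by blast

lemma primes_le_mono: "x \<le> y \<Longrightarrow> primes_le x \<subseteq> primes_le y"
  unfolding primes_le_def by auto

lemma ppi_mono: "x \<le> y \<Longrightarrow> ppi x \<le> ppi y"
  unfolding ppi_def by (simp add: card_mono primes_le_mono)

lemma Sp_mono: "x \<le> y \<Longrightarrow> Sp x \<le> Sp y"
  unfolding Sp_def by (intro sum_mono2 primes_le_mono) auto

lemma Sp_nonneg: "Sp x \<ge> 0"
  unfolding Sp_def by (intro sum_nonneg) auto

lemma primes_le_nat: "primes_le (real N) = {p::nat. prime p \<and> p \<le> N}"
  unfolding primes_le_def by auto

lemma card_primes_le_nat: "card {p::nat. prime p \<and> p \<le> N} \<le> N"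
proof -
  have "{p::nat. prime p \<and> p \<le> N} \<subseteq> {1..N}" by (auto simp: Suc_le_eq prime_gt_0_nat)
  then show ?thesis using card_mono[of "{1..N}"] by fastforce
qed

lemma prod_primes_dvd:
  fixes A :: "nat set"
  assumes "finite A" "\<And>p. p \<in> A \<Longrightarrow> prime p" "\<And>p. p \<in> A \<Longrightarrow> p dvd m"
  shows "\<Prod>A dvd m"
  using assms
proof (induction A rule: finite_induct)
  case empty then show ?case by simp
next
  case (insert p A)
  have "coprime p (\<Prod>A)"
  proof (rule ccontr)
    assume "\<not> coprime p (\<Prod>A)"
    then have "p dvd \<Prod>A" using insert.prems prime_imp_coprime by (metis insertCI)
    then obtain q where "q \<in> A" "p dvd q" using insert prime_dvd_prod_iff[of A p id] by auto
    then have "p = q" using insert.prems insert.hyps primes_dvd_imp_eq by (metis insertCI)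
    then show False using \<open>q \<in> A\<close> insert.hyps by simp
  qed
  then show ?case using insert by (simp add: divides_mult)
qed

lemma prime_dvd_central_binom:
  assumes "prime p" "n < p" "p \<le> 2*n"
  shows "p dvd (2*n choose n)"
proof -
  have "fact n * fact n * (2*n choose n) = (fact (2*n) :: nat)"
    using binomial_fact_lemma[of n "2*n"] by simp
  moreover have "p dvd (fact (2*n) :: nat)" using assms prime_dvd_fact_iff by blast
  moreover have "\<not> p dvd (fact n :: nat)" using assms prime_dvd_fact_iff by auto
  ultimately show ?thesis using assms(1) by (metis prime_dvd_mult_iff)
qed

lemma card_primes_interval:
  fixes n :: nat
  assumes "n \<ge> 2"
  shows "real (card {p::nat. prime p \<and> n < p \<and> p \<le> 2*n}) * ln n \<le> 2 * n * ln 2"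
proof -
  let ?A = "{p::nat. prime p \<and> n < p \<and> p \<le> 2*n}"
  have fin: "finite ?A" by (rule finite_subset[of _ "{..2*n}"]) auto
  have "\<Prod>?A dvd (2*n choose n)"
    by (rule prod_primes_dvd) (auto simp: fin prime_dvd_central_binom)
  then have "\<Prod>?A \<le> (2*n choose n)"
    by (rule dvd_imp_le) (simp add: assms)
  also have "\<dots> \<le> 2^(2*n)" by (rule binomial_le_pow2)
  finally have 1: "\<Prod>?A \<le> 2^(2*n)" .
  have "n ^ card ?A \<le> \<Prod>?A"
    using prod_mono[of ?A "\<lambda>_. n" id] by (simp add: prod_constant)
  with 1 have "n ^ card ?A \<le> (2::nat)^(2*n)" by linarith
  then have "real n ^ card ?A \<le> 2 powr (2*n)"
    by (metis of_nat_le_iff of_nat_numeral of_nat_power powr_realpow zero_less_numeral)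
  then have "ln (real n ^ card ?A) \<le> ln (2 powr (2*n))"
    using assms by (subst ln_le_cancel_iff) auto
  then show ?thesis using assms by (simp add: ln_realpow ln_powr)
qed

lemma card_le_dyadic: "k \<ge> 1 \<Longrightarrow> real (card {p::nat. prime p \<and> p \<le> 2^k}) \<le> 4 * 2^k / k"
proof -
  assume k: "k \<ge> 1"
  show ?thesis
  proof (cases "k \<le> 4")
    case True
    have "real (card {p::nat. prime p \<and> p \<le> 2^k}) \<le> 2^k"
      using card_primes_le_nat[of "2^k"] by (metis of_nat_le_iff of_nat_numeral of_nat_power)
    also have "(2::real)^k \<le> 4 * 2^k / k"
    proof -
      define t :: real where "t = 2^k"
      have "t > 0" unfolding t_def by simp
      then have "t \<le> 4 * t / k" using True k by (simp add: pos_le_divide_eq)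
      then show ?thesis unfolding t_def .
    qed
    finally show ?thesis .
  next
    case False
    have "4 \<le> k" using False by simp
    then show ?thesis
    proof (induction k rule: dec_induct)
      case base
      have "real (card {p::nat. prime p \<and> p \<le> 2^4}) \<le> 2^4"
        using card_primes_le_nat[of "2^4"] by (metis of_nat_le_iff of_nat_numeral of_nat_power)
      then show ?case by simp
    next
      case (step m)
      let ?A = "{p::nat. prime p \<and> p \<le> 2^m}"
      let ?B = "{p::nat. prime p \<and> 2^m < p \<and> p \<le> 2*2^m}"
      define t :: real where "t = 2^m"
      have t: "t > 0" unfolding t_def by simp
      have eq: "{p::nat. prime p \<and> p \<le> 2^Suc m} = ?A \<union> ?B" by auto
      have "card {p::nat. prime p \<and> p \<le> 2^Suc m} \<le> card ?A + card ?B"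
        unfolding eq by (rule card_Un_le)
      then have 1: "real (card {p::nat. prime p \<and> p \<le> 2^Suc m}) \<le> card ?A + card ?B" by linarith
      have 2: "real (card ?A) \<le> 4 * t / m" using step.IH unfolding t_def by simp
      have 3: "real (card ?B) \<le> 2 * t / m"
      proof -
        have "(2::nat)^1 \<le> 2^m" using step by (intro power_increasing) auto
        then have "real (card ?B) * ln (2^m) \<le> 2 * 2^m * ln 2"
          using card_primes_interval[of "2^m"] by simp
        moreover have "ln ((2::real)^m) = m * ln 2" by (simp add: ln_realpow)
        ultimately have "real (card ?B) * m * ln 2 \<le> 2 * t * ln 2" unfolding t_def by (simp add: mult.assoc)
        then have "real (card ?B) * m \<le> 2 * t" by simp
        then show ?thesis using step by (simp add: pos_le_divide_eq)
      qed
      have 4: "4 * t / m + 2 * t / m \<le> 4 * (2*t) / (m+1)"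
        using step t by (simp add: field_simps)
      have "real (card {p::nat. prime p \<and> p \<le> 2^Suc m}) \<le> 4 * (2*t) / (m+1)"
        using 1 2 3 4 by linarith
      then show ?case unfolding t_def by simp
    qed
  qed
qed

lemma nat_dyadic: 
  fixes x :: real
  assumes "x \<ge> 1"
  obtains j :: nat where "2^j \<le> x" "x < 2^(j+1)"
proof -
  have N1: "1 \<le> nat \<lfloor>x\<rfloor>" using assms by linarith
  obtain j where j: "2^j \<le> nat \<lfloor>x\<rfloor>" "nat \<lfloor>x\<rfloor> < 2^(j+1)"
    using ex_power_ivl1[of 2 "nat \<lfloor>x\<rfloor>"] N1 by auto
  have xf: "real (nat \<lfloor>x\<rfloor>) \<le> x" "x < real (nat \<lfloor>x\<rfloor>) + 1" using assms by linarith+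
  have "real (2^j) \<le> real (nat \<lfloor>x\<rfloor>)" using j(1) by (simp only: of_nat_le_iff)
  moreover have "real ((2::nat)^j) = (2::real)^j" by simp
  ultimately have 1: "2^j \<le> x" using xf by linarith
  have "real (nat \<lfloor>x\<rfloor>) + 1 \<le> real (2^(j+1))" using j(2) by linarith
  moreover have "real ((2::nat)^(j+1)) = (2::real)^(j+1)" by (simp only: of_nat_power of_nat_numeral)
  ultimately have 2: "x < 2^(j+1)" using xf by linarith
  show ?thesis using 1 2 that by blast
qed

lemma cheb_upper:
  assumes "x \<ge> 2"
  shows "ppi x \<le> 8 * x / ln x"
proof -
  obtain j :: nat where j: "2^j \<le> x" "x < 2^(j+1)" using nat_dyadic[of x] assms by auto
  have "ppi x \<le> ppi (2^(j+1))" using j by (intro ppi_mono) simp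
  also have "\<dots> = real (card {p::nat. prime p \<and> p \<le> 2^(j+1)})"
    unfolding ppi_def using primes_le_nat[of "2^(j+1)"] by simp
  also have "\<dots> \<le> 4 * 2^(j+1) / (j+1)" using card_le_dyadic[of "j+1"] by simp
  also have "\<dots> \<le> 8 * x / ln x"
  proof -
    have lx: "ln x > 0" using assms by simp
    have "ln x < ln (2^(j+1))" using j assms by (subst ln_less_cancel_iff) auto
    also have "\<dots> = (j+1) * ln 2" by (subst ln_realpow) auto
    also have "\<dots> \<le> j+1" using ln_2_less_1 by simp
    finally have 1: "ln x < j + 1" .
    have "4 * 2^(j+1) / (j+1) = 8 * 2^j / (j+1)" by simp
    also have "\<dots> \<le> 8 * x / (j+1)" using j by (simp add: divide_right_mono)
    also have "\<dots> \<le> 8 * x / ln x" using 1 lx assms by (intro divide_left_mono) auto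
    finally show ?thesis .
  qed
  finally show ?thesis .
qed

lemma card_multiples:
  assumes "d > 0"
  shows "card {m \<in> {1..N}. d dvd m} = N div d"
proof -
  have "{m \<in> {1..N}. d dvd m} = (\<lambda>k. d*k) ` {1..N div d}"
  proof (intro equalityI subsetI)
    fix m assume m: "m \<in> {m \<in> {1..N}. d dvd m}"
    then obtain k where k: "m = d*k" by auto
    have "k \<ge> 1" using m k by (cases k) auto
    moreover have "k \<le> N div d" using m k assms
      by (metis atLeastAtMost_iff div_le_mono mem_Collect_eq nonzero_mult_div_cancel_left not_gr_zero)
    ultimately have "k \<in> {1..N div d}" by simp
    then show "m \<in> (\<lambda>k. d*k) ` {1..N div d}" using k by blast
  next
    fix m assume "m \<in> (\<lambda>k. d*k) ` {1..N div d}"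
    then obtain k where k0: "k \<in> {1..N div d}" and k1: "m = d*k" by blast
    then have k: "m = d*k" "1 \<le> k" "k \<le> N div d" by auto
    have "d*k \<le> d*(N div d)" using k by simp
    also have "\<dots> \<le> N" by simp
    finally show "m \<in> {m \<in> {1..N}. d dvd m}" using k assms by auto
  qed
  moreover have "inj_on (\<lambda>k. d*k) {1..N div d}" using assms by (auto simp: inj_on_def)
  ultimately show ?thesis by (simp add: card_image)
qed

definition psi :: "nat \<Rightarrow> real" where
  "psi N = (\<Sum>d\<in>{1..N}. mangoldt d)"

lemma ln_fact_mangoldt:
  "ln (fact N :: real) = (\<Sum>d\<in>{1..N}. mangoldt d * real (N div d))"
proof -
  have "(fact N :: real) = (\<Prod>m\<in>{1..N}. real m)"
    unfolding fact_prod by (simp add: of_nat_prod)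
  then have "ln (fact N :: real) = (\<Sum>m\<in>{1..N}. ln (real m))"
    by (subst ln_prod[symmetric]) auto
  also have "\<dots> = (\<Sum>m\<in>{1..N}. \<Sum>d\<in>{d. d \<in> {1..N} \<and> d dvd m}. mangoldt d)"
  proof (intro sum.cong refl)
    fix m assume m: "m \<in> {1..N}"
    have "{d. d \<in> {1..N} \<and> d dvd m} = {d. d dvd m}"
      using m by (auto dest: dvd_imp_le intro: Nat.gr0I)
    then show "ln (real m) = (\<Sum>d\<in>{d. d \<in> {1..N} \<and> d dvd m}. mangoldt d)"
      using mangoldt_sum[of m, where 'a=real] m by simp
  qed
  also have "\<dots> = (\<Sum>d\<in>{1..N}. \<Sum>m\<in>{m. m \<in> {1..N} \<and> d dvd m}. mangoldt d)"
    by (rule sum.swap_restrict) auto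
  also have "\<dots> = (\<Sum>d\<in>{1..N}. mangoldt d * real (N div d))"
  proof (intro sum.cong refl)
    fix d assume "d \<in> {1..N}"
    then have "card {m. m \<in> {1..N} \<and> d dvd m} = N div d" using card_multiples[of d N] by simp
    then show "(\<Sum>m\<in>{m. m \<in> {1..N} \<and> d dvd m}. mangoldt d) = mangoldt d * real (N div d)" by simp
  qed
  finally show ?thesis .
qed

lemma div_double_le: "(d::nat) > 0 \<Longrightarrow> (2*n) div d \<le> 2*(n div d) + 1"
proof -
  assume d: "d > 0"
  have "n = d*(n div d) + n mod d" by simp
  then have "2*n = d*(2*(n div d)) + 2*(n mod d)" by linarith
  moreover have "2*(n mod d) < 2*d" using d by simp
  ultimately have "2*n < d*(2*(n div d) + 2)" by (simp add: algebra_simps)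
  then have "(2*n) div d < 2*(n div d) + 2" using d
    by (simp add: div_less_iff_less_mult mult.commute)
  then show ?thesis by simp
qed

lemma sum_lin_aux:
  fixes f a b :: "nat \<Rightarrow> real"
  shows "(\<Sum>d\<in>A. f d * a d) - 2 * (\<Sum>d\<in>A. f d * b d) = (\<Sum>d\<in>A. f d * (a d - 2 * b d))"
  by (simp add: sum_subtractf sum_distrib_left right_diff_distrib mult.left_commute)

lemma ln_binom_le_psi:
  "ln (real (2*n choose n)) \<le> psi (2*n)"
proof -
  have fe0: "fact n * fact n * (2*n choose n) = (fact (2*n) :: nat)"
    using binomial_fact_lemma[of n "2*n"] by simp
  have fe: "fact n * fact n * real (2*n choose n) = fact (2*n)"
  proof -
    have "real (fact n * fact n * (2*n choose n)) = real (fact (2*n))" using fe0 by (simp only:)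
    then show ?thesis by (simp only: of_nat_mult of_nat_fact)
  qed
  have pos: "real (2*n choose n) > 0" by simp
  have fpos: "(fact n :: real) > 0" by simp
  have "ln (fact (2*n) :: real) = ln (fact n) + ln (fact n) + ln (real (2*n choose n))"
    unfolding fe[symmetric] using pos fpos by (simp add: ln_mult)
  then have "ln (real (2*n choose n)) = ln (fact (2*n) :: real) - 2 * ln (fact n)" by simp
  also have "ln (fact n :: real) = (\<Sum>d\<in>{1..2*n}. mangoldt d * real (n div d))"
  proof -
    have "ln (fact n :: real) = (\<Sum>d\<in>{1..n}. mangoldt d * real (n div d))"
      by (rule ln_fact_mangoldt)
    also have "\<dots> = (\<Sum>d\<in>{1..2*n}. mangoldt d * real (n div d))"
      by (rule sum.mono_neutral_left) auto
    finally show ?thesis .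
  qed
  also have "ln (fact (2*n) :: real) - 2 * (\<Sum>d\<in>{1..2*n}. mangoldt d * real (n div d))
      = (\<Sum>d\<in>{1..2*n}. mangoldt d * (real ((2*n) div d) - 2 * real (n div d)))"
    unfolding ln_fact_mangoldt[of "2*n"] by (rule sum_lin_aux)
  also have "\<dots> \<le> (\<Sum>d\<in>{1..2*n}. mangoldt d)"
  proof (intro sum_mono)
    fix d assume d: "d \<in> {1..2*n}"
    then have "(2*n) div d \<le> 2*(n div d) + 1" using div_double_le[of d n] by simp
    then have "real ((2*n) div d) \<le> real (2*(n div d) + 1)" by (simp only: of_nat_le_iff)
    then have "real ((2*n) div d) - 2 * real (n div d) \<le> 1" by simp
    then have "mangoldt d * (real ((2*n) div d) - 2 * real (n div d)) \<le> mangoldt d * 1"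
      using mangoldt_nonneg[of d] by (intro mult_left_mono) auto
    then show "mangoldt d * (real ((2*n) div d) - 2 * real (n div d)) \<le> mangoldt d" by simp
  qed
  finally show ?thesis unfolding psi_def .
qed

lemma primepow_aprime:
  fixes d :: nat
  assumes "primepow d"
  shows "prime (aprimedivisor d)" "aprimedivisor d dvd d" "d > 1"
    "multiplicity (aprimedivisor d) d \<ge> 1"
    "aprimedivisor d ^ multiplicity (aprimedivisor d) d = d"
proof -
  show d1: "d > 1" using primepow_gt_Suc_0[OF assms] by simp
  then have "d \<noteq> 0" "\<not> is_unit d" by auto
  then show "prime (aprimedivisor d)" "aprimedivisor d dvd d"
    by (rule prime_aprimedivisor', rule aprimedivisor_dvd')
  show "multiplicity (aprimedivisor d) d \<ge> 1"
  proof -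
    have "multiplicity (aprimedivisor d) d > 0" using d1 by (intro multiplicity_aprimedivisor_gt_0_nat) simp
    then show ?thesis by simp
  qed
  show "aprimedivisor d ^ multiplicity (aprimedivisor d) d = d"
    by (rule primepow_decompose[OF assms])
qed

lemma psi_le:
  assumes "N \<ge> 1"
  shows "psi N \<le> real (card {p::nat. prime p \<and> p \<le> N}) * ln N"
proof -
  let ?S = "{d\<in>{1..N}. primepow d}"
  let ?T = "{p::nat. prime p \<and> p \<le> N}"
  have finT: "finite ?T" by (rule finite_subset[of _ "{..N}"]) auto
  have "psi N = (\<Sum>d\<in>?S. mangoldt d)"
    unfolding psi_def by (rule sum.mono_neutral_right) (auto simp: mangoldt_def)
  also have "\<dots> = (\<Sum>p\<in>?T. \<Sum>d\<in>{d. d \<in> ?S \<and> aprimedivisor d = p}. mangoldt d)"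
  proof (rule sum.group[symmetric])
    show "aprimedivisor ` ?S \<subseteq> ?T"
    proof
      fix p assume "p \<in> aprimedivisor ` ?S"
      then obtain d where d: "d \<in> ?S" "p = aprimedivisor d" by blast
      have pp: "primepow d" using d by simp
      have "prime p" using d primepow_aprime(1)[OF pp] by simp
      moreover have "p \<le> d" using d primepow_aprime(2,3)[OF pp] by (simp add: dvd_imp_le)
      ultimately show "p \<in> ?T" using d by auto
    qed
  qed (auto simp: finT)
  also have "\<dots> \<le> (\<Sum>p\<in>?T. ln N)"
  proof (intro sum_mono)
    fix p assume p: "p \<in> ?T"
    let ?F = "{d. d \<in> ?S \<and> aprimedivisor d = p}"
    let ?B = "{a. 1 \<le> a \<and> p^a \<le> N}"
    have p1: "p > 1" using p prime_gt_1_nat by auto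
    have sub: "?F \<subseteq> (\<lambda>a. p^a) ` ?B"
    proof
      fix d assume d: "d \<in> ?F"
      then have pp: "primepow d" and dN: "d \<le> N" and ad: "aprimedivisor d = p" by auto
      have e: "p ^ multiplicity p d = d" using primepow_aprime(5)[OF pp] ad by simp
      have "multiplicity p d \<ge> 1" using primepow_aprime(4)[OF pp] ad by simp
      then have "multiplicity p d \<in> ?B" using e dN by simp
      then show "d \<in> (\<lambda>a. p^a) ` ?B" using e by (metis imageI)
    qed
    have finB: "finite ?B"
    proof (rule finite_subset[of _ "{..N}"])
      show "?B \<subseteq> {..N}"
      proof
        fix a assume a: "a \<in> ?B"
        have "a < 2^a" by simp
        also have "(2::nat)^a \<le> p^a" using p1 by (intro power_mono) auto
        also have "\<dots> \<le> N" using a by simp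
        finally show "a \<in> {..N}" by simp
      qed
    qed auto
    have "(\<Sum>d\<in>?F. mangoldt d) = (\<Sum>d\<in>?F. ln (real p))"
      by (intro sum.cong refl) (auto simp: mangoldt_def)
    also have "\<dots> = real (card ?F) * ln p" by simp
    also have "\<dots> \<le> ln N"
    proof (cases "?B = {}")
      case True
      then have "?F = {}" using sub by auto
      then have c0: "card ?F = 0" by (metis card.empty)
      have "ln (real N) \<ge> 0" using assms by simp
      then show ?thesis using c0 by (metis mult_zero_left of_nat_0)
    next
      case False
      define A where "A = Max ?B"
      have A: "A \<in> ?B" unfolding A_def by (rule Max_in[OF finB False])
      have "?B \<subseteq> {1..A}" unfolding A_def using finB by auto
      then have "card ?B \<le> A" using card_mono[of "{1..A}" ?B] by simp
      moreover have "card ?F \<le> card ?B"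
      proof -
        have "card ?F \<le> card ((\<lambda>a. p^a) ` ?B)" using sub finB by (intro card_mono) auto
        also have "\<dots> \<le> card ?B" by (rule card_image_le[OF finB])
        finally show ?thesis .
      qed
      ultimately have cF: "real (card ?F) \<le> A" by linarith
      have "real (card ?F) * ln p \<le> A * ln p" using cF p1 by (intro mult_right_mono) auto
      also have "\<dots> = ln (real p ^ A)" using p1 by (simp add: ln_realpow)
      also have "\<dots> \<le> ln N"
      proof -
        have "p^A \<le> N" using A by simp
        then have "real p ^ A \<le> real N" by (metis of_nat_le_iff of_nat_power)
        then show ?thesis using p1 assms by (subst ln_le_cancel_iff) auto
      qed
      finally show ?thesis .
    qed
    finally show "(\<Sum>d\<in>?F. mangoldt d) \<le> ln N" .
  qed
  also have "\<dots> = real (card ?T) * ln N" by simp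
  finally show ?thesis .
qed

lemma cheb_lower_nat:
  assumes "n \<ge> 1"
  shows "real (card {p::nat. prime p \<and> p \<le> 2*n}) * ln (2*n) \<ge> n * ln 4 - ln (2*n)"
proof -
  have "n * ln 4 - ln (2*n) = ln (4^n / (2*real n))"
    using assms by (simp add: ln_div ln_realpow)
  also have "\<dots> \<le> ln (real (2*n choose n))"
    using central_binomial_lower_bound[of n] assms by (subst ln_le_cancel_iff) auto
  also have "\<dots> \<le> psi (2*n)" by (rule ln_binom_le_psi)
  also have "\<dots> \<le> real (card {p::nat. prime p \<and> p \<le> 2*n}) * ln (2*n)"
    using psi_le[of "2*n"] assms by simp
  finally show ?thesis by simp
qed
lemma ppi_nat: "ppi (real N) = real (card {p::nat. prime p \<and> p \<le> N})"
  unfolding ppi_def primes_le_nat ..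

lemma ev_aux1: "eventually (\<lambda>x::real. (x-2)*(2/3) - ln x \<ge> x/4) at_top"
  by real_asymp

lemma cheb_lower_ev: "eventually (\<lambda>x. ppi x \<ge> x / (4 * ln x)) at_top"
proof -
  have "eventually (\<lambda>x::real. x \<ge> 4 \<and> (x-2)*(2/3) - ln x \<ge> x/4) at_top"
    by (intro eventually_conj eventually_ge_at_top ev_aux1)
  then show ?thesis
  proof (rule eventually_mono)
    fix x :: real assume x: "x \<ge> 4 \<and> (x-2)*(2/3) - ln x \<ge> x/4"
    define n where "n = nat \<lfloor>x/2\<rfloor>"
    have n1: "real n \<le> x/2" "real n > x/2 - 1" using x unfolding n_def by linarith+
    then have n2: "n \<ge> 1" using x by linarith
    have l2: "ln 2 \<ge> (2::real)/3" by (rule ln2_ge_two_thirds)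
    have pos2n: "2 * real n > 1" using n2 by simp
    have ln2n: "ln (2 * real n) > 0" using pos2n by simp
    have ln2nx: "ln (2 * real n) \<le> ln x" using n1 n2 by (subst ln_le_cancel_iff) auto
    have lnx: "ln x > 0" using x by simp
    define B where "B = (x-2)*(2/3) - ln x"
    have B: "B \<ge> x/4" using x unfolding B_def by simp
    have "n * ln 4 - ln (2 * real n) \<ge> B"
    proof -
      have "ln (4::real) = 2 * ln 2" using ln_realpow[of 2 2] by simp
      then have "n * ln 4 = 2 * n * ln 2" by simp
      also have "\<dots> \<ge> (x - 2) * (2/3)"
      proof -
        have "2 * real n \<ge> x - 2" using n1 by simp
        then have "2 * real n * ln 2 \<ge> (x-2) * ln 2" by (intro mult_right_mono) auto
        moreover have "(x-2) * ln 2 \<ge> (x-2) * (2/3)" using x l2 by (intro mult_left_mono) auto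
        ultimately show ?thesis by linarith
      qed
      finally show ?thesis using ln2nx unfolding B_def by linarith
    qed
    then have "real (card {p::nat. prime p \<and> p \<le> 2*n}) * ln (2 * real n) \<ge> B"
      using cheb_lower_nat[OF n2] by linarith
    then have "real (card {p::nat. prime p \<and> p \<le> 2*n}) \<ge> B / ln (2 * real n)"
      using ln2n by (simp add: pos_divide_le_eq)
    moreover have "B / ln (2 * real n) \<ge> B / ln x"
      using B x ln2n ln2nx by (intro divide_left_mono) auto
    moreover have "B / ln x \<ge> (x/4) / ln x" using B lnx by (intro divide_right_mono) auto
    moreover have "ppi x \<ge> ppi (real (2*n))" using n1 by (intro ppi_mono) simp
    ultimately have "ppi x \<ge> (x/4) / ln x" unfolding ppi_nat by linarith
    then show "ppi x \<ge> x / (4 * ln x)" by simp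
  qed
qed

lemma cheb_lower: "\<exists>c>0. \<forall>x\<ge>2. ppi x \<ge> c * x / ln x"
proof -
  obtain X where X: "\<And>x. x \<ge> X \<Longrightarrow> ppi x \<ge> x / (4 * ln x)"
    using cheb_lower_ev by (auto simp: eventually_at_top_linorder)
  define X' where "X' = max X 2"
  define c where "c = min (1/4) (ln 2 / X')"
  have X'2: "X' \<ge> 2" unfolding X'_def by simp
  have c: "c > 0" unfolding c_def using X'2 by simp
  have "ppi x \<ge> c * x / ln x" if x: "x \<ge> 2" for x
  proof (cases "x \<ge> X")
    case True
    have lx: "ln x > 0" using x by simp
    have c14: "c \<le> 1/4" unfolding c_def by (rule min.cobounded1)
    have "c * x / ln x \<le> (1/4) * x / ln x"
      using x lx c14 by (intro divide_right_mono mult_right_mono) auto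
    also have "\<dots> = x / (4 * ln x)" by simp
    also have "\<dots> \<le> ppi x" using X True by simp
    finally show ?thesis .
  next
    case False
    have lx: "ln x \<ge> ln 2" using x by simp
    have l2: "ln (2::real) > 0" by simp
    have c2: "c \<le> ln 2 / X'" unfolding c_def by (rule min.cobounded2)
    have "c * x / ln x \<le> (ln 2 / X') * x / ln x"
      using x lx l2 c2 by (intro divide_right_mono mult_right_mono) auto
    also have "\<dots> = (x / X') * (ln 2 / ln x)" by simp
    also have "\<dots> \<le> 1"
    proof (rule mult_le_one)
      show "x / X' \<le> 1" using False X'2 unfolding X'_def by auto
      have lxp: "ln x > 0" using x by simp
      show "ln 2 / ln x \<le> 1" using lx lxp by (subst divide_le_eq_1_pos) auto
    qed (use x X'2 l2 lx in auto)
    also have "1 \<le> ppi x"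
    proof -
      have "2 \<in> primes_le x" unfolding primes_le_def using x by simp
      then have "card (primes_le x) \<ge> 1"
        using card_0_eq[of "primes_le x"] by fastforce
      then show ?thesis unfolding ppi_def by simp
    qed
    finally show ?thesis by simp
  qed
  then show ?thesis using c by blast
qed
lemma nat_power_ivl:
  fixes x :: real and b :: nat
  assumes "x \<ge> 1" "b \<ge> 2"
  obtains j :: nat where "real b^j \<le> x" "x < real b^(j+1)"
proof -
  have N1: "1 \<le> nat \<lfloor>x\<rfloor>" using assms by linarith
  obtain j where j: "b^j \<le> nat \<lfloor>x\<rfloor>" "nat \<lfloor>x\<rfloor> < b^(j+1)"
    using ex_power_ivl1[of b "nat \<lfloor>x\<rfloor>"] N1 assms by auto
  have xf: "real (nat \<lfloor>x\<rfloor>) \<le> x" "x < real (nat \<lfloor>x\<rfloor>) + 1" using assms by linarith+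
  have "real (b^j) \<le> real (nat \<lfloor>x\<rfloor>)" using j(1) by (simp only: of_nat_le_iff)
  moreover have "real (b^j) = real b^j" by (simp only: of_nat_power)
  ultimately have 1: "real b^j \<le> x" using xf by linarith
  have "real (nat \<lfloor>x\<rfloor>) + 1 \<le> real (b^(j+1))" using j(2) by linarith
  moreover have "real (b^(j+1)) = real b^(j+1)" by (simp only: of_nat_power)
  ultimately have 2: "x < real b^(j+1)" using xf by linarith
  show ?thesis using 1 2 that by blast
qed

lemma primes_le_split:
  assumes "y \<le> z"
  shows "primes_le z = primes_le y \<union> {p \<in> primes_le z. real p > y}"
    "primes_le y \<inter> {p \<in> primes_le z. real p > y} = {}"
  using assms unfolding primes_le_def by auto

lemma Sp_split:
  assumes "y \<le> z"
  shows "Sp z = Sp y + (\<Sum>p\<in>{p \<in> primes_le z. real p > y}. 1 / real p)"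
  unfolding Sp_def by (subst primes_le_split(1)[OF assms], rule sum.union_disjoint) (use primes_le_split(2)[OF assms] in auto)

lemma ppi_pow2: "ppi (2^k) = real (card {p::nat. prime p \<and> p \<le> 2^k})"
proof -
  have "ppi (real ((2::nat)^k)) = real (card {p::nat. prime p \<and> p \<le> 2^k})" by (rule ppi_nat)
  then show ?thesis by simp
qed

lemma Sp_dyadic: "Sp (2^K) \<le> 8 * harm K"
proof (induction K)
  case 0
  have "primes_le (2^0) = {}" unfolding primes_le_def by (auto dest!: prime_gt_1_nat)
  then show ?case unfolding Sp_def by (simp add: harm_def)
next
  case (Suc K)
  let ?B = "{p \<in> primes_le (2^Suc K). real p > 2^K}"
  have "(\<Sum>p\<in>?B. 1 / real p) \<le> real (card ?B) * (1 / 2^K)"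
  proof (rule sum_bounded_above)
    fix p assume "p \<in> ?B"
    then have "real p \<ge> 2^K" by simp
    moreover have "(2::real)^K > 0" by simp
    ultimately have pp: "real p > 0" "real p \<ge> 2^K" "(2::real)^K > 0" by linarith+
    show "1 / real p \<le> 1 / 2^K" by (rule divide_left_mono[OF pp(2)]) (simp, rule mult_pos_pos[OF pp(1) pp(3)])
  qed
  also have "\<dots> \<le> ppi (2^Suc K) * (1 / 2^K)"
  proof -
    have "card ?B \<le> card (primes_le (2^Suc K))" by (intro card_mono) auto
    then show ?thesis unfolding ppi_def by (intro mult_right_mono) auto
  qed
  also have "\<dots> \<le> (4 * 2^Suc K / Suc K) * (1 / 2^K)"
  proof -
    have "ppi (2^Suc K) \<le> 4 * 2^Suc K / Suc K" unfolding ppi_pow2 by (rule card_le_dyadic) simp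
    then show ?thesis by (intro mult_right_mono) auto
  qed
  also have "\<dots> = 8 / Suc K" by simp
  finally have B: "(\<Sum>p\<in>?B. 1 / real p) \<le> 8 / Suc K" .
  have "Sp (2^Suc K) = Sp (2^K) + (\<Sum>p\<in>?B. 1 / real p)" by (rule Sp_split) simp
  also have "\<dots> \<le> 8 * harm K + 8 / Suc K" using Suc.IH B by linarith
  also have "\<dots> = 8 * harm (Suc K)" by (simp add: harm_Suc field_simps)
  finally show ?case .
qed

lemma mertens_upper:
  assumes "x \<ge> 2"
  shows "Sp x \<le> 8 * ln (ln x) + 24"
proof -
  obtain j :: nat where j: "2^j \<le> x" "x < 2^(j+1)" using nat_dyadic[of x] assms by auto
  have j1: "j \<ge> 1"
  proof (rule ccontr)
    assume "\<not> j \<ge> 1" then have "j = 0" by simp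
    then show False using j assms by simp
  qed
  have lx: "ln x > 0" using assms by simp
  have "Sp x \<le> Sp (2^(j+1))" using j by (intro Sp_mono) simp
  also have "\<dots> \<le> 8 * harm (j+1)" by (rule Sp_dyadic)
  also have "harm (j+1) \<le> ln (real (j+1)) + 1"
    using euler_mascheroni_sequence_decreasing[of 1 "j+1"] by (simp add: harm_def)
  also have "ln (real (j+1)) \<le> ln (3 * ln x)"
  proof -
    have "real j * ln 2 \<le> ln x"
    proof -
      have "ln ((2::real)^j) \<le> ln x" using j assms by (subst ln_le_cancel_iff) auto
      then show ?thesis by (simp add: ln_realpow)
    qed
    moreover have "ln (2::real) \<ge> 2/3" by (rule ln2_ge_two_thirds)
    ultimately have "real j * (2/3) \<le> ln x" 
      by (smt (verit) mult_left_mono of_nat_0_le_iff)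
    then have "real (j+1) \<le> 3 * ln x" using j1 by simp
    then show ?thesis using lx by (subst ln_le_cancel_iff) auto
  qed
  also have "ln (3 * ln x) = ln 3 + ln (ln x)" using lx by (simp add: ln_mult)
  finally have "Sp x \<le> 8 * (ln 3 + ln (ln x) + 1)" by simp
  moreover have "ln (3::real) \<le> 3 - 1" by (rule ln_le_minus_one) simp
  ultimately show ?thesis by simp
qed
lemma lnln_ev: "eventually (\<lambda>x::real. ln (ln x) \<ge> C) at_top"
proof -
  have "filterlim (\<lambda>x::real. ln (ln x)) at_top at_top" by real_asymp
  then show ?thesis by (simp add: filterlim_at_top)
qed

lemma block_lower:
  fixes K :: nat and c0 :: real
  assumes K2: "K \<ge> 2" and c0: "c0 > 0" and cK: "c0 * K \<ge> 18"
    and cheb: "\<And>x. x \<ge> 2 \<Longrightarrow> ppi x \<ge> c0 * x / ln x"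
    and j: "j \<ge> 1"
  shows "(\<Sum>p\<in>{p \<in> primes_le (real K^(j+1)). real p > real K^j}. 1 / real p) \<ge> 1 / (K * j * ln K)"
proof -
  define y where "y = real K ^ j"
  let ?B = "{p \<in> primes_le (K*y). real p > y}"
  have eqB: "{p \<in> primes_le (real K^(j+1)). real p > real K^j} = ?B" unfolding y_def by simp
  have Kr: "real K \<ge> 2" using K2 by simp
  have y2: "y \<ge> 2"
  proof -
    have "real K \<le> real K ^ j" using power_increasing[of 1 j "real K"] Kr j by simp
    then show ?thesis using Kr unfolding y_def by linarith
  qed
  have lnK: "ln (real K) > 0" using Kr by simp
  have lny: "ln y = j * ln K" unfolding y_def using Kr by (simp add: ln_realpow)
  have lnypos: "ln y > 0" using y2 by simp
  have lnKy: "ln (K * y) \<le> 2 * ln y"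
  proof -
    have "ln (K * y) = ln K + ln y" using Kr y2 by (simp add: ln_mult)
    also have "\<dots> \<le> 2 * ln y" using lny j lnK
      by (smt (verit, best) mult_le_cancel_right1 of_nat_1 of_nat_le_iff)
    finally show ?thesis .
  qed
  have Ky: "K * y \<ge> y" using Kr y2 by simp
  have Ky1: "K * y > 1" using Ky y2 by linarith
  have lnKypos: "ln (K*y) > 0" using Ky1 by simp
  have cardB: "real (card ?B) = ppi (K*y) - ppi y"
  proof -
    have "card (primes_le (K*y)) = card (primes_le y) + card ?B"
      using primes_le_split[OF Ky] by (metis card_Un_disjoint finite_primes_le finite_Un)
    then show ?thesis unfolding ppi_def by simp
  qed
  have "ppi (K*y) \<ge> c0 * (K*y) / ln (K*y)" using cheb[of "K*y"] Ky y2 by linarith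
  moreover have "c0 * (K*y) / ln (K*y) \<ge> c0 * (K*y) / (2 * ln y)"
    by (rule divide_left_mono[OF lnKy]) (use c0 Ky1 lnypos lnKypos in auto)
  moreover have "ppi y \<le> 8 * y / ln y" using cheb_upper y2 by simp
  ultimately have "real (card ?B) \<ge> c0 * (K*y) / (2 * ln y) - 8 * y / ln y" using cardB by linarith
  also have "c0 * (K*y) / (2 * ln y) - 8 * y / ln y = (c0 * K / 2 - 8) * (y / ln y)"
    using lnypos by (simp add: field_simps)
  also have "\<dots> \<ge> 1 * (y / ln y)"
    using cK y2 lnypos by (intro mult_right_mono) auto
  finally have cB: "real (card ?B) \<ge> y / ln y" by simp
  have "(\<Sum>p\<in>?B. 1 / real p) \<ge> real (card ?B) * (1 / (K*y))"
  proof (rule sum_bounded_below)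
    fix p assume "p \<in> ?B"
    then have pp: "real p \<le> K*y" "real p > 0" using y2 unfolding primes_le_def by auto
    show "1 / (K*y) \<le> 1 / real p"
      by (rule divide_left_mono[OF pp(1)]) (use pp Ky1 in auto)
  qed
  moreover have "real (card ?B) * (1 / (K*y)) \<ge> (y / ln y) * (1 / (K*y))"
    using cB Ky1 by (intro mult_right_mono) auto
  moreover have "(y / ln y) * (1 / (K*y)) = 1 / (K * j * ln K)"
  proof -
    have "(y / ln y) * (1 / (K*y)) = 1 / (K * ln y)" using y2 Kr by (simp add: field_simps)
    then show ?thesis unfolding lny by (simp add: mult.assoc)
  qed
  ultimately have "(\<Sum>p\<in>?B. 1 / real p) \<ge> 1 / (K * j * ln K)" by linarith
  then show ?thesis unfolding eqB .
qed

lemma Sp_Kadic: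
  fixes K :: nat and c0 :: real
  assumes K2: "K \<ge> 2" and c0: "c0 > 0" and cK: "c0 * K \<ge> 18"
    and cheb: "\<And>x. x \<ge> 2 \<Longrightarrow> ppi x \<ge> c0 * x / ln x"
  shows "Sp (real K^(J+1)) \<ge> harm J / (K * ln K)"
proof (induction J)
  case 0
  then show ?case using Sp_nonneg by (simp add: harm_def)
next
  case (Suc J)
  have le: "real K^(J+1) \<le> real K^(Suc J + 1)" using K2 by (intro power_increasing) auto
  have "Sp (real K^(Suc J+1)) = Sp (real K^(J+1)) +
      (\<Sum>p\<in>{p \<in> primes_le (real K^(Suc J+1)). real p > real K^(J+1)}. 1 / real p)"
    by (rule Sp_split[OF le])
  also have "\<dots> \<ge> harm J / (K * ln K) + 1 / (K * Suc J * ln K)"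
    using Suc.IH block_lower[OF K2 c0 cK cheb, of "Suc J"] by simp
  finally have "Sp (real K^(Suc J+1)) \<ge> harm J / (K * ln K) + 1 / (K * Suc J * ln K)" .
  moreover have "harm J / (K * ln K) + 1 / (K * Suc J * ln K) = harm (Suc J) / (K * ln K)"
  proof -
    have lnK: "ln (real K) > 0" "real K > 0" using K2 by simp_all
    have "harm (Suc J) / (K * ln K) = (harm J + 1 / Suc J) / (K * ln K)"
      by (simp add: harm_Suc inverse_eq_divide)
    also have "\<dots> = harm J / (K * ln K) + 1 / (K * Suc J * ln K)"
      using lnK by (simp add: add_divide_distrib algebra_simps)
    finally show ?thesis by simp
  qed
  ultimately show ?case by simp
qed

lemma mertens_lower: "\<exists>a>0. eventually (\<lambda>x. Sp x \<ge> a * ln (ln x)) at_top"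
proof -
  obtain c0 where c0: "c0 > 0" and cheb: "\<And>x. x \<ge> 2 \<Longrightarrow> ppi x \<ge> c0 * x / ln x"
    using cheb_lower by blast
  define K :: nat where "K = nat \<lceil>18 / c0\<rceil> + 2"
  have K2: "K \<ge> 2" unfolding K_def by simp
  have cK: "c0 * K \<ge> 18"
  proof -
    have "real K \<ge> 18 / c0" unfolding K_def by linarith
    then show ?thesis using c0 by (simp add: field_simps)
  qed
  have Kr: "real K \<ge> 2" using K2 by simp
  have lnK: "ln (real K) > 0" using Kr by simp
  define a where "a = 1 / (2 * K * ln K)"
  have a: "a > 0" unfolding a_def using Kr lnK by simp
  have "eventually (\<lambda>x::real. x \<ge> real K^2 \<and> ln (ln x) \<ge> 2 * ln (2 * ln K)) at_top"
    by (intro eventually_conj eventually_ge_at_top lnln_ev)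
  then have "eventually (\<lambda>x. Sp x \<ge> a * ln (ln x)) at_top"
  proof (rule eventually_mono)
    fix x :: real assume x: "x \<ge> real K^2 \<and> ln (ln x) \<ge> 2 * ln (2 * ln K)"
    have "(2::real)^2 \<le> real K^2" using Kr by (intro power_mono) auto
    then have "4 \<le> real K^2" by simp
    then have x1: "x \<ge> 4" using x by linarith
    obtain J' :: nat where J': "real K^J' \<le> x" "x < real K^(J'+1)"
      using nat_power_ivl[of x K] x1 K2 by auto
    have "real K^2 < real K^(J'+1)" using x J' by linarith
    then have "2 < J' + 1" using Kr by (subst (asm) power_strict_increasing_iff) auto
    then have J'2: "J' \<ge> 2" by simp
    define J where "J = J' - 1"
    have J: "J' = J + 1" "J \<ge> 1" unfolding J_def using J'2 by simp_all
    have lx: "ln x > 0" using x1 by simp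
    have "Sp x \<ge> Sp (real K^(J+1))" using J' J by (intro Sp_mono) simp
    moreover have "Sp (real K^(J+1)) \<ge> harm J / (K * ln K)" by (rule Sp_Kadic[OF K2 c0 cK cheb])
    moreover have "harm J \<ge> ln (real J + 1)" by (rule harm_ge_ln)
    moreover have "ln (real J + 1) \<ge> ln (ln x) - ln (2 * ln K)"
    proof -
      have "ln x < ln (real K^(J+2))" using J' J x1 by (subst ln_less_cancel_iff) auto
      also have "\<dots> = (J+2) * ln K" using Kr by (subst ln_realpow) auto
      also have "\<dots> \<le> (2 * (real J + 1)) * ln K" using lnK by (intro mult_right_mono) auto
      finally have "ln x / (2 * ln K) < real J + 1" using lnK by (simp add: field_simps)
      then have "ln (ln x / (2 * ln K)) \<le> ln (real J + 1)" using lx lnK by (subst ln_le_cancel_iff) auto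
      moreover have "ln (ln x / (2 * ln K)) = ln (ln x) - ln (2 * ln K)" using lx lnK by (simp add: ln_div)
      ultimately show ?thesis by simp
    qed
    moreover have "ln (ln x) - ln (2 * ln K) \<ge> ln (ln x) / 2" using x by simp
    ultimately have "Sp x \<ge> (ln (ln x) / 2) / (K * ln K)"
      using lnK Kr by (smt (verit) divide_right_mono mult_pos_pos of_nat_0_less_iff zero_less_numeral K2)
    then show "Sp x \<ge> a * ln (ln x)" unfolding a_def by (simp add: field_simps)
  qed
  then show ?thesis using a by blast
qed
definition Om :: "nat \<Rightarrow> nat" where
  "Om n = size (prime_factorization n)"

definition CntEq :: "nat \<Rightarrow> real \<Rightarrow> nat set" where
  "CntEq k x = {n. 0 < n \<and> real n \<le> x \<and> Om n = k}"

definition Vset :: "nat \<Rightarrow> real \<Rightarrow> nat set" where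
  "Vset k y = {m. 0 < m \<and> Om m = k \<and> (\<forall>p\<in>prime_factors m. real p \<le> y)}"

lemma Om_1 [simp]: "Om 1 = 0"
  unfolding Om_def by simp

lemma Om_Suc0 [simp]: "Om (Suc 0) = 0"
  unfolding Om_def by simp

lemma Om_mult_prime:
  assumes "prime p" "m > 0"
  shows "Om (p * m) = Om m + 1"
  unfolding Om_def using assms by (simp add: prime_factorization_times_prime)

lemma Om_0_iff: "n > 0 \<Longrightarrow> Om n = 0 \<longleftrightarrow> n = 1"
  unfolding Om_def using prime_factorization_empty_iff[of n] by auto

lemma card_prime_factors_le_Om: "card (prime_factors n) \<le> Om n"
proof -
  have "card (set_mset M) \<le> size M" for M :: "nat multiset"
  proof (induction M)
    case empty then show ?case by simp
  next
    case (add x M)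
    have "card (set_mset (add_mset x M)) \<le> Suc (card (set_mset M))"
      by (simp add: card_insert_le_m1 card_insert_if)
    then show ?case using add by simp
  qed
  then show ?thesis unfolding Om_def by simp
qed

lemma prod_mset_le_pow:
  fixes M :: "nat multiset" and y :: real
  assumes "\<And>p. p \<in># M \<Longrightarrow> real p \<le> y"
  shows "real (prod_mset M) \<le> y ^ size M"
  using assms
proof (induction M)
  case empty then show ?case by simp
next
  case (add x M)
  have "real x \<le> y" using add.prems by simp
  moreover have "real (prod_mset M) \<le> y ^ size M" using add by simp
  ultimately have "real x * real (prod_mset M) \<le> y * y ^ size M"
    by (intro mult_mono) auto
  then show ?case by simp
qed

lemma le_pow_Om:
  fixes y :: real
  assumes "n > 0" "\<And>p. p \<in> prime_factors n \<Longrightarrow> real p \<le> y"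
  shows "real n \<le> y ^ Om n"
proof -
  have "real (prod_mset (prime_factorization n)) \<le> y ^ size (prime_factorization n)"
    by (rule prod_mset_le_pow) (use assms in auto)
  then show ?thesis using assms(1) unfolding Om_def by simp
qed

lemma CntEq_subset: "CntEq k x \<subseteq> {1..nat \<lfloor>x\<rfloor>}"
  unfolding CntEq_def by (auto simp: le_nat_floor)

lemma finite_CntEq [simp]: "finite (CntEq k x)"
  using CntEq_subset finite_subset by blast

lemma aprime_facts:
  fixes m :: nat
  assumes "m > 1"
  shows "prime (aprimedivisor m)" "aprimedivisor m dvd m"
proof -
  have "m \<noteq> 0" "\<not> is_unit m" using assms by auto
  then show "prime (aprimedivisor m)" "aprimedivisor m dvd m"
    by (rule prime_aprimedivisor', rule aprimedivisor_dvd')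
qed

lemma sum_CntEq_le: "(\<Sum>m\<in>CntEq k x. 1 / real m) \<le> Sp x ^ k"
proof (induction k)
  case 0
  have "CntEq 0 x \<subseteq> {1}" unfolding CntEq_def using Om_0_iff by auto
  then have "(\<Sum>m\<in>CntEq 0 x. 1 / real m) \<le> (\<Sum>m\<in>{1::nat}. 1 / real m)"
    by (intro sum_mono2) auto
  then show ?case by simp
next
  case (Suc k)
  let ?S = "CntEq (Suc k) x"
  define g where "g m = (aprimedivisor m, m div aprimedivisor m)" for m :: nat
  have mem: "prime (aprimedivisor m) \<and> aprimedivisor m dvd m \<and> m = aprimedivisor m * (m div aprimedivisor m)"
    if "m \<in> ?S" for m
  proof -
    have "m > 0" "Om m = Suc k" using that unfolding CntEq_def by auto
    then have "m \<noteq> 1" by auto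
    then have "m > 1" using \<open>m > 0\<close> by simp
    then show ?thesis using aprime_facts[of m] by simp
  qed
  have inj: "inj_on g ?S"
  proof (rule inj_onI)
    fix a b assume ab: "a \<in> ?S" "b \<in> ?S" "g a = g b"
    then show "a = b" using mem[OF ab(1)] mem[OF ab(2)] unfolding g_def by (metis prod.inject)
  qed
  have img: "g ` ?S \<subseteq> primes_le x \<times> CntEq k x"
  proof
    fix z assume "z \<in> g ` ?S"
    then obtain m where m: "m \<in> ?S" "z = g m" by blast
    define p where "p = aprimedivisor m"
    have pm: "prime p" "p dvd m" "m = p * (m div p)" using mem[OF m(1)] unfolding p_def by auto
    have m0: "m > 0" "real m \<le> x" "Om m = Suc k" using m unfolding CntEq_def by auto
    have p0: "p > 0" using pm prime_gt_0_nat by blast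
    have q0: "m div p > 0" using pm m0 by (metis gr0I mult_0_right)
    have "p \<le> m" using pm m0 by (simp add: dvd_imp_le)
    then have "real p \<le> x" using m0 by linarith
    moreover have "m div p \<le> m" by simp
    then have "real (m div p) \<le> x" using m0 by linarith
    moreover have "Om (m div p) = k"
      using Om_mult_prime[OF pm(1) q0] pm m0 by simp
    ultimately show "z \<in> primes_le x \<times> CntEq k x"
      using m pm q0 unfolding g_def p_def[symmetric] primes_le_def CntEq_def by auto
  qed
  have "(\<Sum>m\<in>?S. 1 / real m) = (\<Sum>m\<in>?S. (\<lambda>(p,q). 1 / (real p * real q)) (g m))"
  proof (intro sum.cong refl)
    fix m assume "m \<in> ?S"
    from mem[OF this] show "1 / real m = (\<lambda>(p,q). 1 / (real p * real q)) (g m)"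
      unfolding g_def by (metis (no_types, lifting) case_prod_conv of_nat_mult)
  qed
  also have "\<dots> = (\<Sum>z\<in>g ` ?S. (\<lambda>(p,q). 1 / (real p * real q)) z)"
    by (subst sum.reindex[OF inj]) (simp add: o_def)
  also have "\<dots> \<le> (\<Sum>z\<in>primes_le x \<times> CntEq k x. (\<lambda>(p,q). 1 / (real p * real q)) z)"
    by (rule sum_mono2[OF _ img]) auto
  also have "\<dots> = (\<Sum>p\<in>primes_le x. 1 / real p) * (\<Sum>q\<in>CntEq k x. 1 / real q)"
    by (simp add: sum_product sum.cartesian_product)
  also have "\<dots> \<le> Sp x * Sp x ^ k"
    unfolding Sp_def[symmetric] using Suc.IH Sp_nonneg by (intro mult_left_mono) auto
  finally show ?case by simp
qed
lemma fiber_sum_le: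
  fixes g :: "'a \<Rightarrow> 'b" and w :: "'b \<Rightarrow> real"
  assumes "finite A" "finite B" "g ` A \<subseteq> B"
    "\<And>b. b \<in> B \<Longrightarrow> card {a \<in> A. g a = b} \<le> r"
    "\<And>b. b \<in> B \<Longrightarrow> w b \<ge> 0"
  shows "(\<Sum>a\<in>A. w (g a)) \<le> real r * (\<Sum>b\<in>B. w b)"
proof -
  have "(\<Sum>a\<in>A. w (g a)) = (\<Sum>b\<in>B. \<Sum>a\<in>{a. a \<in> A \<and> g a = b}. w (g a))"
    by (rule sum.group[symmetric]) (use assms in auto)
  also have "\<dots> = (\<Sum>b\<in>B. real (card {a \<in> A. g a = b}) * w b)"
    by (intro sum.cong refl) simp
  also have "\<dots> \<le> (\<Sum>b\<in>B. real r * w b)"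
    using assms(4,5) by (intro sum_mono mult_right_mono) auto
  also have "\<dots> = real r * (\<Sum>b\<in>B. w b)" by (simp add: sum_distrib_left)
  finally show ?thesis .
qed

lemma fiber_mult_card:
  fixes A :: "(nat \<times> nat) set"
  assumes "\<And>m q. (m, q) \<in> A \<Longrightarrow> prime q \<and> m > 0"
  shows "card {a \<in> A. (\<lambda>(m,q). m * q) a = n} \<le> Om n"
proof -
  have sub: "{a \<in> A. (\<lambda>(m,q). m * q) a = n} \<subseteq> (\<lambda>q. (n div q, q)) ` prime_factors n"
  proof
    fix a assume a: "a \<in> {a \<in> A. (\<lambda>(m,q). m * q) a = n}"
    obtain m q where mq: "a = (m, q)" by (cases a)
    have pq: "prime q" "m > 0" "m * q = n" using a mq assms by auto
    have "q \<in> prime_factors n" using pq by (auto simp: in_prime_factors_iff prime_gt_0_nat)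
    moreover have "m = n div q" using pq prime_gt_0_nat[of q] by auto
    ultimately show "a \<in> (\<lambda>q. (n div q, q)) ` prime_factors n" using mq by blast
  qed
  have "card {a \<in> A. (\<lambda>(m,q). m * q) a = n} \<le> card ((\<lambda>q. (n div q, q)) ` prime_factors n)"
    by (rule card_mono[OF _ sub]) simp
  also have "\<dots> \<le> card (prime_factors n)" by (rule card_image_le) simp
  also have "\<dots> \<le> Om n" by (rule card_prime_factors_le_Om)
  finally show ?thesis .
qed

lemma Vset_subset:
  assumes "y \<ge> 1"
  shows "Vset k y \<subseteq> {1..nat \<lfloor>y ^ k\<rfloor>}"
proof
  fix m assume m: "m \<in> Vset k y"
  then have "real m \<le> y ^ Om m" using le_pow_Om[of m y] unfolding Vset_def by auto
  then have "real m \<le> y ^ k" using m unfolding Vset_def by auto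
  then show "m \<in> {1..nat \<lfloor>y ^ k\<rfloor>}" using m unfolding Vset_def by (auto simp: le_nat_floor)
qed

lemma finite_Vset: "y \<ge> 1 \<Longrightarrow> finite (Vset k y)"
  by (rule finite_subset[OF Vset_subset]) auto

lemma Vset_le:
  assumes "m \<in> Vset k y" "y \<ge> 1"
  shows "real m \<le> y ^ k"
proof -
  have m: "m > 0" "Om m = k" "\<And>p. p \<in> prime_factors m \<Longrightarrow> real p \<le> y"
    using assms(1) unfolding Vset_def by auto
  show ?thesis using le_pow_Om[of m y, OF m(1) m(3)] m(2) by simp
qed

lemma sum_Vset_ge:
  assumes "y \<ge> 1"
  shows "Sp y ^ k \<le> fact k * (\<Sum>m\<in>Vset k y. 1 / real m)"
proof (induction k)
  case 0
  have "Vset 0 y \<subseteq> {1}"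
  proof
    fix m assume "m \<in> Vset 0 y"
    then have "m > 0" "Om m = 0" unfolding Vset_def by auto
    then show "m \<in> {1}" using Om_0_iff[of m] by simp
  qed
  moreover have "1 \<in> Vset 0 y" unfolding Vset_def by simp
  ultimately have "Vset 0 y = {1}" by blast
  then show ?case by simp
next
  case (Suc k)
  let ?A = "primes_le y \<times> Vset k y"
  let ?h = "\<lambda>(p::nat, m::nat). p * m"
  have finV: "finite (Vset k y)" "finite (Vset (Suc k) y)" using finite_Vset assms by auto
  have img: "?h ` ?A \<subseteq> Vset (Suc k) y"
  proof
    fix n assume "n \<in> ?h ` ?A"
    then obtain a where a: "a \<in> ?A" "n = ?h a" by blast
    obtain p m where "a = (p, m)" by (cases a)
    then have pm: "p \<in> primes_le y" "m \<in> Vset k y" "n = p * m" using a by auto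
    have p: "prime p" "real p \<le> y" using pm unfolding primes_le_def by auto
    have m: "m > 0" "Om m = k" "\<forall>q\<in>prime_factors m. real q \<le> y" using pm unfolding Vset_def by auto
    have "n > 0" using pm p m prime_gt_0_nat by simp
    moreover have "Om n = Suc k" using Om_mult_prime[OF p(1) m(1)] pm m by simp
    moreover have "\<forall>q\<in>prime_factors n. real q \<le> y"
    proof
      fix q assume q: "q \<in> prime_factors n"
      have "prime_factors n = prime_factors p \<union> prime_factors m"
        using pm p m prime_gt_0_nat[of p] by (simp add: prime_factorization_mult)
      then show "real q \<le> y" using q p m by (auto simp: prime_factorization_prime)
    qed
    ultimately show "n \<in> Vset (Suc k) y" unfolding Vset_def by auto
  qed
  have fib: "card {a \<in> ?A. ?h a = n} \<le> Suc k" if "n \<in> Vset (Suc k) y" for n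
  proof -
    have "card {a \<in> ?A. ?h a = n} = card {a \<in> {(m,q). (q,m) \<in> ?A}. (\<lambda>(m,q). m * q) a = n}"
    proof -
      have "{a \<in> {(m,q). (q,m) \<in> ?A}. (\<lambda>(m,q). m * q) a = n} = (\<lambda>(p,m). (m,p)) ` {a \<in> ?A. ?h a = n}"
        by (auto simp: image_iff mult.commute)
      moreover have "inj_on (\<lambda>(p::nat,m::nat). (m,p)) {a \<in> ?A. ?h a = n}" by (auto simp: inj_on_def)
      ultimately show ?thesis by (simp add: card_image)
    qed
    also have "\<dots> \<le> Om n"
      by (rule fiber_mult_card) (auto simp: primes_le_def Vset_def)
    also have "\<dots> = Suc k" using that unfolding Vset_def by simp
    finally show ?thesis .
  qed
  have "Sp y ^ Suc k = Sp y * Sp y ^ k" by simp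
  also have "\<dots> \<le> Sp y * (fact k * (\<Sum>m\<in>Vset k y. 1 / real m))"
    using Suc.IH Sp_nonneg by (intro mult_left_mono) auto
  also have "\<dots> = fact k * (\<Sum>a\<in>?A. 1 / real (?h a))"
    by (simp add: Sp_def sum_product sum.cartesian_product case_prod_unfold)
  also have "(\<Sum>a\<in>?A. 1 / real (?h a)) \<le> real (Suc k) * (\<Sum>n\<in>Vset (Suc k) y. 1 / real n)"
    by (rule fiber_sum_le[OF _ _ img fib]) (use finV in auto)
  then have "fact k * (\<Sum>a\<in>?A. 1 / real (?h a)) \<le> fact k * (real (Suc k) * (\<Sum>n\<in>Vset (Suc k) y. 1 / real n))"
    by (intro mult_left_mono) auto
  also have "\<dots> = fact (Suc k) * (\<Sum>n\<in>Vset (Suc k) y. 1 / real n)" by (simp add: algebra_simps)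
  finally show ?case .
qed
lemma powr_facts:
  fixes x :: real
  assumes "x > 0" "k \<ge> 1"
  defines "z \<equiv> x powr (1 / (2 * real k))"
  shows "z > 0" "z ^ k = sqrt x" "z ^ (2*k) = x" "ln z = ln x / (2 * real k)"
proof -
  show z0: "z > 0" unfolding z_def using assms by simp
  have "z ^ k = z powr real k" using z0 by (simp add: powr_realpow)
  also have "\<dots> = x powr (1 / (2 * real k) * real k)" unfolding z_def by (simp add: powr_powr)
  also have "1 / (2 * real k) * real k = 1/2" using assms by simp
  also have "x powr (1/2) = sqrt x" using assms by (simp add: powr_half_sqrt)
  finally show zk: "z ^ k = sqrt x" .
  have "z ^ (2*k) = (z ^ k)^2" by (simp add: power_mult mult.commute)
  then show "z ^ (2*k) = x" using zk assms by simp
  show "ln z = ln x / (2 * real k)" unfolding z_def using assms by (simp add: ln_powr)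
qed

lemma card_sqrt_part:
  assumes "x \<ge> 0"
  shows "real (card {n \<in> CntEq k x. real n \<le> sqrt x}) \<le> sqrt x"
proof -
  have s0: "sqrt x \<ge> 0" using assms by simp
  have "{n \<in> CntEq k x. real n \<le> sqrt x} \<subseteq> {1..nat \<lfloor>sqrt x\<rfloor>}"
    unfolding CntEq_def by (auto simp: le_nat_floor)
  then have "card {n \<in> CntEq k x. real n \<le> sqrt x} \<le> nat \<lfloor>sqrt x\<rfloor>"
    using card_mono[of "{1..nat \<lfloor>sqrt x\<rfloor>}"] by fastforce
  then have "real (card {n \<in> CntEq k x. real n \<le> sqrt x}) \<le> real (nat \<lfloor>sqrt x\<rfloor>)"
    by (simp only: of_nat_le_iff)
  moreover have "real (nat \<lfloor>sqrt x\<rfloor>) \<le> sqrt x" using s0 by linarith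
  ultimately show ?thesis by linarith
qed

lemma count_eq_upper:
  assumes k: "k \<ge> 1" and x: "x \<ge> 4 ^ k"
  shows "real (card (CntEq k x)) \<le> sqrt x + 16 * real k * x / ln x * Sp x ^ (k-1)"
proof -
  have x4: "x \<ge> 4"
  proof -
    have "(4::real)^1 \<le> 4^k" using k by (intro power_increasing) auto
    then show ?thesis using x by simp
  qed
  have x0: "x > 0" using x4 by simp
  have lx: "ln x > 0" using x4 by simp
  define z where "z = x powr (1 / (2 * real k))"
  note zf = powr_facts[OF x0 k, folded z_def]
  have z2: "z \<ge> 2"
  proof -
    have e1: "(2::real) ^ (2*k) = 4 ^ k" by (simp add: power_mult)
    have le: "(2::real) ^ (2*k) \<le> z ^ (2*k)" using x by (simp only: e1 zf(3))
    show ?thesis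
    proof (rule ccontr)
      assume "\<not> z \<ge> 2"
      then have "z ^ (2*k) < 2 ^ (2*k)" using zf(1) k by (intro power_strict_mono) auto
      then show False using le by simp
    qed
  qed
  let ?S = "CntEq k x"
  let ?S1 = "{n \<in> ?S. real n \<le> sqrt x}"
  let ?S2 = "{n \<in> ?S. real n > sqrt x}"
  have eqS: "?S = ?S1 \<union> ?S2" by auto
  have "card ?S = card (?S1 \<union> ?S2)" using eqS by (rule arg_cong)
  also have "\<dots> \<le> card ?S1 + card ?S2" by (rule card_Un_le)
  finally have "card ?S \<le> card ?S1 + card ?S2" .
  then have c12: "real (card ?S) \<le> real (card ?S1) + real (card ?S2)" by linarith
  define P where "P n = Max (prime_factors n)" for n :: nat
  have Pfacts: "prime (P n) \<and> P n dvd n \<and> real n \<le> real (P n) ^ k \<and> real (P n) > z" if n: "n \<in> ?S2" for n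
  proof -
    have n0: "n > 0" "real n \<le> x" "Om n = k" "real n > sqrt x" using n unfolding CntEq_def by auto
    have "sqrt x \<ge> 2" using x4 by (simp add: real_le_rsqrt)
    then have n1: "n > 1" using n0 by linarith
    have ne: "prime_factors n \<noteq> {}"
    proof
      assume "prime_factors n = {}"
      then have "prime_factorization n = {#}" by simp
      then show False using n1 prime_factorization_empty_iff[of n] by simp
    qed
    have Pin: "P n \<in> prime_factors n" unfolding P_def using ne by (intro Max_in) auto
    have le: "\<And>p. p \<in> prime_factors n \<Longrightarrow> real p \<le> real (P n)" unfolding P_def by simp
    have "real n \<le> real (P n) ^ Om n" by (rule le_pow_Om[OF n0(1) le])
    then have nP: "real n \<le> real (P n) ^ k" using n0 by simp
    have "real (P n) > z"
    proof (rule ccontr)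
      assume "\<not> real (P n) > z"
      then have "real (P n) ^ k \<le> z ^ k" by (intro power_mono) auto
      then show False using nP n0 zf by simp
    qed
    then show ?thesis using Pin nP by (auto simp: in_prime_factors_iff)
  qed
  define f where "f n = (n div P n, P n)" for n
  let ?T = "SIGMA m:CntEq (k-1) x. {q \<in> primes_le (x / real m). real q > z}"
  have inj: "inj_on f ?S2"
  proof (rule inj_onI)
    fix a b assume ab: "a \<in> ?S2" "b \<in> ?S2" "f a = f b"
    then have "a div P a = b div P b" "P a = P b" unfolding f_def by auto
    moreover have "a = a div P a * P a" "b = b div P b * P b" using Pfacts[OF ab(1)] Pfacts[OF ab(2)] by simp_all
    ultimately show "a = b" by metis
  qed
  have img: "f ` ?S2 \<subseteq> ?T"
  proof
    fix w assume "w \<in> f ` ?S2"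
    then obtain n where n: "n \<in> ?S2" "w = f n" by blast
    have n0: "n > 0" "real n \<le> x" "Om n = k" using n unfolding CntEq_def by auto
    have pf: "prime (P n)" "P n dvd n" "real (P n) > z" using Pfacts[OF n(1)] by auto
    define m where "m = n div P n"
    have nm: "n = P n * m" unfolding m_def using pf by simp
    have m0: "m > 0" using nm n0 by (metis gr0I mult_0_right)
    have "Om m = k - 1" using Om_mult_prime[OF pf(1) m0] nm n0 by simp
    moreover have "real m \<le> x"
    proof -
      have "m \<le> n" unfolding m_def by simp
      then show ?thesis using n0 by linarith
    qed
    moreover have "real (P n) \<le> x / real m"
    proof -
      have "real (P n) * real m \<le> x" using nm n0 by (metis of_nat_mult)
      then show ?thesis using m0 by (simp add: pos_le_divide_eq)
    qed
    ultimately show "w \<in> ?T" using n m0 pf unfolding f_def m_def[symmetric] CntEq_def primes_le_def by auto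
  qed
  have finT: "finite ?T" by (intro finite_SigmaI) auto
  have "card ?S2 = card (f ` ?S2)" using inj by (simp add: card_image)
  also have "\<dots> \<le> card ?T" using finT img by (rule card_mono)
  also have "card ?T = (\<Sum>m\<in>CntEq (k-1) x. card {q \<in> primes_le (x / real m). real q > z})"
    by (rule card_SigmaI) auto
  finally have cS2n: "card ?S2 \<le> (\<Sum>m\<in>CntEq (k-1) x. card {q \<in> primes_le (x / real m). real q > z})" .
  have "real (card ?S2) \<le> real (\<Sum>m\<in>CntEq (k-1) x. card {q \<in> primes_le (x / real m). real q > z})"
    using cS2n by (simp only: of_nat_le_iff)
  also have "\<dots> = (\<Sum>m\<in>CntEq (k-1) x. real (card {q \<in> primes_le (x / real m). real q > z}))"
    by (rule of_nat_sum)
  also have "\<dots> \<le> (\<Sum>m\<in>CntEq (k-1) x. 16 * real k * x / ln x * (1 / real m))"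
  proof (rule sum_mono)
    fix m assume m: "m \<in> CntEq (k-1) x"
    then have m0: "real m > 0" unfolding CntEq_def by auto
    have rhs0: "16 * real k * x / ln x * (1 / real m) \<ge> 0" using x0 lx m0 by simp
    show "real (card {q \<in> primes_le (x / real m). real q > z}) \<le> 16 * real k * x / ln x * (1 / real m)"
    proof (cases "x / real m > z")
      case False
      then have "{q \<in> primes_le (x / real m). real q > z} = {}" unfolding primes_le_def by auto
      then have "card {q \<in> primes_le (x / real m). real q > z} = 0" by (simp only: card.empty)
      then show ?thesis using rhs0 by (simp only: of_nat_0)
    next
      case True
      have y2: "x / real m \<ge> 2" using True z2 by linarith
      have "real (card {q \<in> primes_le (x / real m). real q > z}) \<le> ppi (x / real m)"
        unfolding ppi_def by (intro of_nat_mono card_mono) auto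
      also have "\<dots> \<le> 8 * (x / real m) / ln (x / real m)" by (rule cheb_upper[OF y2])
      also have "\<dots> \<le> 8 * (x / real m) / (ln x / (2 * real k))"
      proof (rule divide_left_mono)
        have "ln z \<le> ln (x / real m)" using True zf(1) by (subst ln_le_cancel_iff) auto
        then show "ln x / (2 * real k) \<le> ln (x / real m)" using zf by simp
        show "0 \<le> 8 * (x / real m)" using x0 m0 by simp
        show "0 < ln (x / real m) * (ln x / (2 * real k))" using y2 lx k by (intro mult_pos_pos) auto
      qed
      also have "\<dots> = 16 * real k * x / ln x * (1 / real m)" using lx m0 k by (simp add: field_simps)
      finally show ?thesis .
    qed
  qed
  also have "\<dots> = 16 * real k * x / ln x * (\<Sum>m\<in>CntEq (k-1) x. 1 / real m)" by (simp add: sum_distrib_left)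
  also have "\<dots> \<le> 16 * real k * x / ln x * Sp x ^ (k-1)"
    using sum_CntEq_le x0 lx by (intro mult_left_mono) auto
  finally have "real (card ?S2) \<le> 16 * real k * x / ln x * Sp x ^ (k-1)" .
  then show ?thesis using c12 card_sqrt_part[of x k] x0 by linarith
qed
definition CntLe :: "nat \<Rightarrow> real \<Rightarrow> nat set" where
  "CntLe l x = {n. 0 < n \<and> real n \<le> x \<and> Om n \<le> l}"

lemma CntLe_UN: "CntLe l x = (\<Union>k\<in>{..l}. CntEq k x)"
  unfolding CntLe_def CntEq_def by auto

lemma finite_CntLe [simp]: "finite (CntLe l x)"
  unfolding CntLe_UN by auto

lemma card_CntEq0: "card (CntEq 0 x) \<le> 1"
proof -
  have "CntEq 0 x \<subseteq> {1}" unfolding CntEq_def using Om_0_iff by auto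
  then show ?thesis using card_mono[of "{1::nat}" "CntEq 0 x"] by simp
qed

lemma count_le_bound:
  assumes l: "l \<ge> 1" and x: "x \<ge> 4 ^ l"
  shows "real (card (CntLe l x)) \<le> (real l + 1) * (1 + sqrt x + 16 * real l * x / ln x * (max 1 (Sp x)) ^ (l-1))"
proof -
  define A where "A = 1 + sqrt x + 16 * real l * x / ln x * (max 1 (Sp x)) ^ (l-1)"
  have x4: "x \<ge> 4"
  proof -
    have "(4::real)^1 \<le> 4^l" using l by (intro power_increasing) auto
    then show ?thesis using x by simp
  qed
  have lx: "ln x > 0" using x4 by simp
  have Bpos: "max 1 (Sp x) ^ (l-1) \<ge> 0" by simp
  have each: "real (card (CntEq k x)) \<le> A" if k: "k \<in> {..l}" for k
  proof (cases "k = 0")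
    case True
    have "real (card (CntEq k x)) \<le> 1" using card_CntEq0 True by simp
    moreover have "sqrt x + 16 * real l * x / ln x * (max 1 (Sp x)) ^ (l-1) \<ge> 0"
      using x4 lx Bpos by simp
    ultimately show ?thesis using True unfolding A_def by linarith
  next
    case False
    then have k1: "k \<ge> 1" by simp
    have "(4::real)^k \<le> 4^l" using k by (intro power_increasing) auto
    then have xk: "x \<ge> 4^k" using x by linarith
    have "Sp x ^ (k-1) \<le> (max 1 (Sp x)) ^ (k-1)" using Sp_nonneg by (intro power_mono) auto
    also have "\<dots> \<le> (max 1 (Sp x)) ^ (l-1)" using k by (intro power_increasing) auto
    finally have sp: "Sp x ^ (k-1) \<le> (max 1 (Sp x)) ^ (l-1)" .
    have "16 * real k * x / ln x * Sp x ^ (k-1) \<le> 16 * real l * x / ln x * (max 1 (Sp x)) ^ (l-1)"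
    proof (rule mult_mono)
      show "16 * real k * x / ln x \<le> 16 * real l * x / ln x"
        using k x4 lx by (intro divide_right_mono mult_right_mono) auto
    qed (use sp x4 lx Sp_nonneg in auto)
    then show ?thesis using count_eq_upper[OF k1 xk] unfolding A_def by linarith
  qed
  have "card (CntLe l x) \<le> (\<Sum>k\<in>{..l}. card (CntEq k x))"
    unfolding CntLe_UN by (rule card_UN_le) simp
  then have "real (card (CntLe l x)) \<le> real (\<Sum>k\<in>{..l}. card (CntEq k x))"
    by (simp only: of_nat_le_iff)
  also have "\<dots> = (\<Sum>k\<in>{..l}. real (card (CntEq k x)))" by (rule of_nat_sum)
  also have "\<dots> \<le> (\<Sum>k\<in>{..l}. A)" using each by (rule sum_mono)
  also have "\<dots> = (real l + 1) * A" by simp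
  finally show ?thesis unfolding A_def .
qed

lemma count_upper_ev:
  assumes l: "l \<ge> 1"
  shows "\<exists>Cu>0. eventually (\<lambda>x. real (card (CntLe l x)) \<le> Cu * x * (ln (ln x)) ^ (l-1) / ln x) at_top"
proof -
  define Cu :: real where "Cu = 1 + 16 * real l * (real l + 1) * 32 ^ (l-1)"
  have Cu: "Cu > 0" unfolding Cu_def by (simp add: add_pos_nonneg)
  have ev: "eventually (\<lambda>x::real. x \<ge> 4^l \<and> ln (ln x) \<ge> 1 \<and> (real l + 1) * (1 + sqrt x) \<le> x / ln x) at_top"
    by (intro eventually_conj eventually_ge_at_top lnln_ev) real_asymp
  have "eventually (\<lambda>x. real (card (CntLe l x)) \<le> Cu * x * (ln (ln x)) ^ (l-1) / ln x) at_top"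
    using ev
  proof (rule eventually_mono)
    fix x :: real assume x: "x \<ge> 4^l \<and> ln (ln x) \<ge> 1 \<and> (real l + 1) * (1 + sqrt x) \<le> x / ln x"
    have x4: "x \<ge> 4"
    proof -
      have "(4::real)^1 \<le> 4^l" using l by (intro power_increasing) auto
      then show ?thesis using x by simp
    qed
    have lx: "ln x > 0" using x4 by simp
    define L where "L = ln (ln x)"
    have L1: "L \<ge> 1" using x unfolding L_def by simp
    have Sp2: "Sp x \<le> 8 * L + 24" unfolding L_def using mertens_upper x4 by simp
    have B: "max 1 (Sp x) \<le> 32 * L" using Sp2 L1 by simp
    have Bp: "max 1 (Sp x) ^ (l-1) \<le> (32 * L) ^ (l-1)" using B by (intro power_mono) auto
    have Lp: "L ^ (l-1) \<ge> 1" using L1 by simp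
    have "real (card (CntLe l x)) \<le> (real l + 1) * (1 + sqrt x + 16 * real l * x / ln x * (max 1 (Sp x)) ^ (l-1))"
      using count_le_bound[OF l] x by simp
    also have "\<dots> = (real l + 1) * (1 + sqrt x) + (real l + 1) * (16 * real l * x / ln x) * (max 1 (Sp x)) ^ (l-1)"
      by (simp add: algebra_simps)
    also have "\<dots> \<le> x / ln x * L ^ (l-1) + (real l + 1) * (16 * real l * x / ln x) * ((32 ^ (l-1)) * L ^ (l-1))"
    proof (rule add_mono)
      have t0: "x / ln x \<ge> 0" using x4 lx by simp
      have "x / ln x * 1 \<le> x / ln x * L ^ (l-1)" by (rule mult_left_mono[OF Lp t0])
      then have "x / ln x \<le> x / ln x * L ^ (l-1)" by simp
      then show "(real l + 1) * (1 + sqrt x) \<le> x / ln x * L ^ (l-1)" using x by linarith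
      show "(real l + 1) * (16 * real l * x / ln x) * (max 1 (Sp x)) ^ (l-1)
          \<le> (real l + 1) * (16 * real l * x / ln x) * ((32 ^ (l-1)) * L ^ (l-1))"
        using Bp x4 lx by (intro mult_left_mono) (auto simp: power_mult_distrib)
    qed
    also have "\<dots> = Cu * x * L ^ (l-1) / ln x" unfolding Cu_def using lx by (simp add: field_simps)
    finally show "real (card (CntLe l x)) \<le> Cu * x * (ln (ln x)) ^ (l-1) / ln x" unfolding L_def .
  qed
  then show ?thesis using Cu by blast
qed
lemma count_lower_ev:
  assumes l: "l \<ge> 1"
  shows "\<exists>cl>0. eventually (\<lambda>x. real (card (CntEq l x)) \<ge> cl * x * (ln (ln x)) ^ (l-1) / ln x) at_top"
proof -
  obtain c0 where c0: "c0 > 0" and cheb: "\<And>x. x \<ge> 2 \<Longrightarrow> ppi x \<ge> c0 * x / ln x"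
    using cheb_lower by blast
  obtain a where a: "a > 0" and ev_a: "eventually (\<lambda>y. Sp y \<ge> a * ln (ln y)) at_top"
    using mertens_lower by blast
  obtain Y where Y: "\<And>y. y \<ge> Y \<Longrightarrow> Sp y \<ge> a * ln (ln y)"
    using ev_a by (auto simp: eventually_at_top_linorder)
  define Y' where "Y' = max Y 1"
  define cl where "cl = c0 * (a/2)^(l-1) / (fact (l-1) * real l)"
  have cl: "cl > 0" unfolding cl_def using c0 a l by simp
  have ev: "eventually (\<lambda>x::real. x \<ge> Y'^(2*l) \<and> x \<ge> 4 \<and> ln (ln x) \<ge> 2 * ln (2 * real l)) at_top"
    by (intro eventually_conj eventually_ge_at_top lnln_ev)
  have "eventually (\<lambda>x. real (card (CntEq l x)) \<ge> cl * x * (ln (ln x)) ^ (l-1) / ln x) at_top"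
    using ev
  proof (rule eventually_mono)
    fix x :: real assume x: "x \<ge> Y'^(2*l) \<and> x \<ge> 4 \<and> ln (ln x) \<ge> 2 * ln (2 * real l)"
    have x4: "x \<ge> 4" and x0: "x > 0" using x by auto
    have lx: "ln x > 0" using x4 by simp
    define y where "y = x powr (1 / (2 * real l))"
    note yf = powr_facts[OF x0 l, folded y_def]
    have yY: "y \<ge> Y'"
    proof (rule ccontr)
      assume "\<not> y \<ge> Y'"
      then have "y ^ (2*l) < Y' ^ (2*l)" using yf(1) l by (intro power_strict_mono) auto
      then show False using x yf(3) by simp
    qed
    have y1: "y \<ge> 1" using yY unfolding Y'_def by simp
    have Sy: "Sp y \<ge> a * ln (ln y)" using Y yY unfolding Y'_def by simp
    define L where "L = ln (ln x)"
    have l2: "ln (2 * real l) \<ge> 0" using l by simp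
    have L0: "L \<ge> 0" using x l2 unfolding L_def by linarith
    have "ln (ln y) = ln (ln x / (2 * real l))" using yf by simp
    also have "\<dots> = L - ln (2 * real l)" unfolding L_def using lx l by (simp add: ln_div)
    also have "\<dots> \<ge> L / 2" using x unfolding L_def by simp
    finally have lly: "ln (ln y) \<ge> L / 2" .
    have "a * (L/2) \<le> a * ln (ln y)" using lly a by (intro mult_left_mono) auto
    then have SyL: "Sp y \<ge> (a/2) * L" using Sy by simp
    have sx: "sqrt x \<ge> 2" using x4 by (simp add: real_le_rsqrt)
    let ?V = "Vset (l-1) y"
    let ?Q = "SIGMA m:?V. primes_le (x / real m)"
    have finV: "finite ?V" using finite_Vset y1 by simp
    have mV: "real m \<le> sqrt x \<and> real m \<ge> 1 \<and> m > 0 \<and> Om m = l - 1" if m: "m \<in> ?V" for m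
    proof -
      have "real m \<le> y ^ (l-1)" by (rule Vset_le[OF m y1])
      also have "\<dots> \<le> y ^ l" using y1 by (intro power_increasing) auto
      also have "\<dots> = sqrt x" by (rule yf(2))
      finally show ?thesis using m unfolding Vset_def by auto
    qed
    have finQ: "finite ?Q" using finV by (intro finite_SigmaI) auto
    have cardQ: "real (card ?Q) = (\<Sum>m\<in>?V. ppi (x / real m))"
    proof -
      have "card ?Q = (\<Sum>m\<in>?V. card (primes_le (x / real m)))"
        by (rule card_SigmaI) (use finV in auto)
      then have "real (card ?Q) = real (\<Sum>m\<in>?V. card (primes_le (x / real m)))" by (simp only:)
      also have "\<dots> = (\<Sum>m\<in>?V. real (card (primes_le (x / real m))))" by (rule of_nat_sum)
      finally show ?thesis unfolding ppi_def .
    qed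
    also have "\<dots> \<ge> (\<Sum>m\<in>?V. c0 * x / ln x * (1 / real m))"
    proof (rule sum_mono)
      fix m assume m: "m \<in> ?V"
      note mm = mV[OF m]
      have m0: "real m > 0" using mm by simp
      have xm: "x / real m \<ge> sqrt x"
      proof -
        have "sqrt x * real m \<le> sqrt x * sqrt x" using mm sx x0 by (intro mult_left_mono) auto
        also have "\<dots> = x" using x0 by simp
        finally show ?thesis using m0 by (simp add: pos_le_divide_eq)
      qed
      then have xm2: "x / real m \<ge> 2" using sx by linarith
      have lxm: "ln (x / real m) > 0" using xm2 by simp
      have lxm2: "ln (x / real m) \<le> ln x"
      proof -
        have "x / real m \<le> x" using mm x0 by (simp add: divide_le_eq_1_pos field_simps)
        then show ?thesis using xm2 x0 by (subst ln_le_cancel_iff) auto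
      qed
      have "c0 * x / ln x * (1 / real m) = c0 * (x / real m) / ln x" by simp
      also have "\<dots> \<le> c0 * (x / real m) / ln (x / real m)"
        using lxm lxm2 c0 xm2 x0 lx m0 by (intro divide_left_mono mult_pos_pos) auto
      also have "\<dots> \<le> ppi (x / real m)" using cheb[OF xm2] .
      finally show "c0 * x / ln x * (1 / real m) \<le> ppi (x / real m)" .
    qed
    finally have Q1: "real (card ?Q) \<ge> c0 * x / ln x * (\<Sum>m\<in>?V. 1 / real m)"
      by (simp add: sum_distrib_left)
    have "Sp y ^ (l-1) \<le> fact (l-1) * (\<Sum>m\<in>?V. 1 / real m)" by (rule sum_Vset_ge[OF y1])
    then have V1: "(\<Sum>m\<in>?V. 1 / real m) \<ge> Sp y ^ (l-1) / fact (l-1)"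
      by (simp add: divide_le_eq mult.commute)
    have "Sp y ^ (l-1) \<ge> ((a/2) * L) ^ (l-1)" using SyL a L0 by (intro power_mono) auto
    then have V2: "(\<Sum>m\<in>?V. 1 / real m) \<ge> ((a/2) * L) ^ (l-1) / fact (l-1)"
      using V1 by (smt (verit) divide_right_mono fact_ge_zero)
    have Q2: "real (card ?Q) \<ge> c0 * x / ln x * (((a/2) * L) ^ (l-1) / fact (l-1))"
      using Q1 V2 c0 x0 lx by (smt (verit) mult_left_mono divide_nonneg_pos mult_pos_pos)
    have img: "(\<lambda>(m,q). m * q) ` ?Q \<subseteq> CntEq l x"
    proof
      fix n assume "n \<in> (\<lambda>(m,q). m * q) ` ?Q"
      then obtain w where w: "w \<in> ?Q" "n = (\<lambda>(m,q). m * q) w" by blast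
      obtain m q where "w = (m, q)" by (cases w)
      then have mq: "m \<in> ?V" "q \<in> primes_le (x / real m)" "n = m * q" using w by auto
      note mm = mV[OF mq(1)]
      have q: "prime q" "real q \<le> x / real m" using mq unfolding primes_le_def by auto
      have "real n = real m * real q" using mq by simp
      also have "\<dots> \<le> real m * (x / real m)" using q mm by (intro mult_left_mono) auto
      also have "\<dots> = x" using mm by simp
      finally have "real n \<le> x" .
      moreover have "Om n = l" using Om_mult_prime[OF q(1), of m] mm mq l by (simp add: mult.commute)
      moreover have "n > 0" using mq mm q prime_gt_0_nat by simp
      ultimately show "n \<in> CntEq l x" unfolding CntEq_def by simp
    qed
    have fib: "card {w \<in> ?Q. (\<lambda>(m,q). m * q) w = n} \<le> l" if "n \<in> CntEq l x" for n
    proof -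
      have "card {w \<in> ?Q. (\<lambda>(m,q). m * q) w = n} \<le> Om n"
        by (rule fiber_mult_card) (auto simp: primes_le_def Vset_def)
      then show ?thesis using that unfolding CntEq_def by simp
    qed
    have "(\<Sum>w\<in>?Q. (\<lambda>_. 1::real) ((\<lambda>(m,q). m * q) w)) \<le> real l * (\<Sum>n\<in>CntEq l x. (\<lambda>_. 1::real) n)"
      by (rule fiber_sum_le[OF finQ _ img fib]) auto
    then have Q3: "real (card ?Q) \<le> real l * real (card (CntEq l x))" by simp
    have "cl * x * L ^ (l-1) / ln x = (c0 * x / ln x * (((a/2) * L) ^ (l-1) / fact (l-1))) / real l"
      unfolding cl_def using l lx by (simp add: field_simps power_mult_distrib)
    also have "\<dots> \<le> real (card ?Q) / real l" using Q2 l by (intro divide_right_mono) auto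
    also have "\<dots> \<le> real (card (CntEq l x))" using Q3 l by (simp add: divide_le_eq mult.commute)
    finally show "real (card (CntEq l x)) \<ge> cl * x * (ln (ln x)) ^ (l-1) / ln x" unfolding L_def .
  qed
  then show ?thesis using cl by blast
qed
lemma pow_powr: "(x::real) > 0 \<Longrightarrow> (x ^ n) powr a = (x powr a) ^ n"
proof -
  assume x: "x > 0"
  have "(x ^ n) powr a = (x powr real n) powr a" using x by (simp add: powr_realpow)
  also have "\<dots> = x powr (a * real n)" by (simp add: powr_powr mult.commute)
  also have "\<dots> = (x powr a) powr real n" by (simp add: powr_powr)
  also have "\<dots> = (x powr a) ^ n" using x by (simp add: powr_realpow)
  finally show ?thesis .
qed

lemma L_mono:
  fixes M x :: real and l :: nat
  assumes M0: "M > 0" and lM: "ln M > 1" and a1: "ln (ln M) \<ge> real (l-1)" and Mx: "M \<le> x"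
  shows "(ln (ln x))^(l-1) / ln x \<le> (ln (ln M))^(l-1) / ln M"
proof -
  define a where "a = ln (ln M)"
  have a0: "a > 0" unfolding a_def using lM by simp
  have lx: "ln x \<ge> ln M" using Mx M0 by (subst ln_le_cancel_iff) auto
  define u where "u = ln x / ln M"
  have u1: "u \<ge> 1" unfolding u_def using lx lM by simp
  have lxu: "ln x = u * ln M" unfolding u_def using lM by simp
  define b where "b = ln (ln x)"
  have b: "b = ln u + a" unfolding b_def a_def using lxu u1 lM by (simp add: ln_mult)
  define t where "t = ln u / a"
  have t0: "t \<ge> 0" unfolding t_def using u1 a0 by simp
  have bt: "b = a * (1 + t)" unfolding t_def b using a0 by (simp add: field_simps)
  have b0: "b \<ge> 0" using bt a0 t0 by simp
  have "b ^ (l-1) = a ^ (l-1) * (1 + t) ^ (l-1)" unfolding bt by (simp add: power_mult_distrib)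
  also have "\<dots> \<le> a ^ (l-1) * exp t ^ (l-1)"
    using a0 t0 by (intro mult_left_mono power_mono) auto
  also have "exp t ^ (l-1) = exp (real (l-1) * t)" by (simp add: exp_of_nat_mult)
  also have "\<dots> \<le> exp (ln u)"
  proof -
    have "real (l-1) * t \<le> a * t" using a1 t0 unfolding a_def by (intro mult_right_mono) auto
    also have "a * t = ln u" unfolding t_def using a0 by simp
    finally show ?thesis by simp
  qed
  also have "exp (ln u) = u" using u1 by simp
  finally have bu: "b ^ (l-1) \<le> a ^ (l-1) * u" using a0 by simp
  have "b ^ (l-1) / ln x = b ^ (l-1) / (u * ln M)" using lxu by simp
  also have "\<dots> \<le> (a ^ (l-1) * u) / (u * ln M)"
    using bu u1 lM by (intro divide_right_mono) auto
  also have "\<dots> = a ^ (l-1) / ln M" using u1 by simp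
  finally show ?thesis unfolding a_def b_def .
qed
lemma almost_primes_Om: "almost_primes l = {k. k > 0 \<and> Om k \<le> l}"
  unfolding almost_primes_def Om_def by simp

theorem theorem1p7:
  fixes l :: nat and s :: real
  assumes "l \<ge> 1" and "s > 1"
  shows "\<exists>C1 C2 M0. C1 > 0 \<and> C2 > 0 \<and> M0 \<ge> 1 \<and>
    (\<forall>M::real. M \<ge> M0 \<longrightarrow>
       C1 * (ln (ln M)) ^ (l - 1) / (M powr (s - 1) * ln M) \<le> P_tail l s M \<and>
       P_tail l s M \<le> C2 * (ln (ln M)) ^ (l - 1) / (M powr (s - 1) * ln M))"
proof -
  note l = assms(1) and s = assms(2)
  obtain Cu where Cu: "Cu > 0" and evU: "eventually (\<lambda>x. real (card (CntLe l x)) \<le> Cu * x * (ln (ln x)) ^ (l-1) / ln x) at_top"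
    using count_upper_ev[OF l] by blast
  obtain cl where cl: "cl > 0" and evL: "eventually (\<lambda>x. real (card (CntEq l x)) \<ge> cl * x * (ln (ln x)) ^ (l-1) / ln x) at_top"
    using count_lower_ev[OF l] by blast
  obtain X1 where X1: "\<And>x. x \<ge> X1 \<Longrightarrow> real (card (CntLe l x)) \<le> Cu * x * (ln (ln x)) ^ (l-1) / ln x"
    using evU by (auto simp: eventually_at_top_linorder)
  obtain X2 where X2: "\<And>x. x \<ge> X2 \<Longrightarrow> real (card (CntEq l x)) \<ge> cl * x * (ln (ln x)) ^ (l-1) / ln x"
    using evL by (auto simp: eventually_at_top_linorder)
  define K where "K = 2 * (Cu + 1) / cl + 1"
  have K1: "K \<ge> 1" unfolding K_def using Cu cl by simp
  have clK: "cl * K / 2 - Cu \<ge> 1"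
  proof -
    have e: "cl * K = 2 * (Cu + 1) + cl" unfolding K_def using cl by (simp add: field_simps)
    have "cl * K / 2 - Cu = 1 + cl / 2" unfolding e by (simp add: field_simps)
    then show ?thesis using cl by linarith
  qed
  have lnev: "eventually (\<lambda>x::real. ln x \<ge> 2) at_top" by real_asymp
  have "eventually (\<lambda>M::real. M \<ge> X1 \<and> M \<ge> X2 \<and> M \<ge> K \<and> M \<ge> 1 \<and> ln M \<ge> 2 \<and> ln (ln M) \<ge> real (l-1)) at_top"
    by (intro eventually_conj eventually_ge_at_top lnln_ev lnev)
  then obtain M0' where M0': "\<And>M. M \<ge> M0' \<Longrightarrow> M \<ge> X1 \<and> M \<ge> X2 \<and> M \<ge> K \<and> M \<ge> 1 \<and> ln M \<ge> 2 \<and> ln (ln M) \<ge> real (l-1)"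
    by (auto simp: eventually_at_top_linorder)
  define M0 where "M0 = max M0' 1"
  define q where "q = 2 powr (s - 1)"
  have q1: "q > 1" unfolding q_def using s by simp
  define C1 where "C1 = 1 / K powr s"
  define C2 where "C2 = 2 * Cu * q / (q - 1)"
  have C1: "C1 > 0" unfolding C1_def using K1 by simp
  have C2: "C2 > 0" unfolding C2_def using Cu q1 by simp
  have main: "C1 * (ln (ln M)) ^ (l - 1) / (M powr (s - 1) * ln M) \<le> P_tail l s M \<and>
       P_tail l s M \<le> C2 * (ln (ln M)) ^ (l - 1) / (M powr (s - 1) * ln M)" if M: "M \<ge> M0" for M
  proof -
    have MM: "M \<ge> X1" "M \<ge> X2" "M \<ge> K" "M \<ge> 1" "ln M \<ge> 2" "ln (ln M) \<ge> real (l-1)"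
      using M0'[of M] M unfolding M0_def by auto
    have M0p: "M > 0" using MM by simp
    have lM1: "ln M > 1" using MM by simp
    have llM: "ln (ln M) > 0" using lM1 by simp
    define LM where "LM = (ln (ln M)) ^ (l-1) / ln M"
    have LM: "LM > 0" unfolding LM_def using llM lM1 by simp
    define Mp where "Mp = M powr (s - 1)"
    have Mp: "Mp > 0" unfolding Mp_def using M0p by simp
    have Ms: "M powr s = M * Mp"
    proof -
      have "M powr s = M powr (1 + (s - 1))" by simp
      also have "\<dots> = M powr 1 * M powr (s - 1)" by (rule powr_add)
      finally show ?thesis unfolding Mp_def using M0p by simp
    qed
    have targ: "\<And>C. C * (ln (ln M)) ^ (l - 1) / (M powr (s - 1) * ln M) = C * LM / Mp"
      unfolding LM_def Mp_def by simp
    define f where "f k = 1 / (real k powr s)" for k :: nat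
    have f_def': "\<And>k. 1 / (real k powr s) = f k" unfolding f_def by simp
    have fnn: "f k \<ge> 0" for k unfolding f_def by simp
    define T where "T = {k \<in> almost_primes l. real k \<ge> M}"
    have Pt: "P_tail l s M = infsum f T" unfolding P_tail_def T_def f_def ..
    define B where "B = 2 * Cu * LM / Mp * (q / (q - 1))"
    define Blk where "Blk i = {k \<in> T. 2^i * M \<le> real k \<and> real k < 2^(i+1) * M}" for i :: nat
    have finBlk: "finite (Blk i)" for i
    proof -
      have "Blk i \<subseteq> CntLe l (2^(i+1) * M)"
        unfolding Blk_def T_def CntLe_def almost_primes_Om by auto
      then show ?thesis by (rule finite_subset) simp
    qed
    have blk: "sum f (Blk i) \<le> 2 * Cu * LM / Mp * (1 / q) ^ i" for i
    proof -
      define x where "x = 2^(i+1) * M"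
      have "(1::real) \<le> 2^(i+1)" by (rule one_le_power) simp
      then have "1 * M \<le> 2^(i+1) * M" using M0p by (intro mult_right_mono) auto
      then have xM: "x \<ge> M" unfolding x_def by simp
      have "card (Blk i) \<le> card (CntLe l x)"
        by (rule card_mono[OF finite_CntLe]) (auto simp: Blk_def T_def CntLe_def almost_primes_Om x_def)
      then have "real (card (Blk i)) \<le> real (card (CntLe l x))" by simp
      also have "\<dots> \<le> Cu * x * (ln (ln x)) ^ (l-1) / ln x" using X1 xM MM by simp
      also have "\<dots> = Cu * x * ((ln (ln x)) ^ (l-1) / ln x)" by simp
      also have "\<dots> \<le> Cu * x * LM" unfolding LM_def
        using L_mono[OF M0p lM1 MM(6) xM] Cu xM M0p by (intro mult_left_mono) auto
      finally have cB: "real (card (Blk i)) \<le> Cu * x * LM" .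
      have fb: "f k \<le> 1 / ((2^i * M) powr s)" if "k \<in> Blk i" for k
      proof -
        have k: "2^i * M \<le> real k" using that unfolding Blk_def by simp
        have pos: "(2^i * M) powr s > 0" using M0p by simp
        have pk: "real k powr s > 0" using k M0p
          by (metis powr_gt_zero mult_pos_pos zero_less_power zero_less_numeral not_le)
        have le: "(2^i * M) powr s \<le> real k powr s" using k s M0p by (intro powr_mono2) auto
        show ?thesis unfolding f_def by (rule divide_left_mono[OF le]) (simp, rule mult_pos_pos[OF pk pos])
      qed
      have "sum f (Blk i) \<le> real (card (Blk i)) * (1 / ((2^i * M) powr s))"
        by (rule sum_bounded_above) (use fb in auto)
      also have "\<dots> \<le> (Cu * x * LM) * (1 / ((2^i * M) powr s))"
        using cB by (intro mult_right_mono) auto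
      also have "(2^i * M) powr s = 2^i * (2 powr (s-1))^i * (M * Mp)"
      proof -
        have "(2^i * M) powr s = (2^i) powr s * M powr s" by (rule powr_mult)
        also have "((2::real)^i) powr s = (2 powr s)^i" by (rule pow_powr) simp
        also have "2 powr s = 2 * 2 powr (s - 1)"
        proof -
          have "(2::real) powr s = 2 powr (1 + (s-1))" by simp
          also have "\<dots> = 2 powr 1 * 2 powr (s-1)" by (rule powr_add)
          finally show ?thesis by simp
        qed
        finally show ?thesis using Ms by (simp add: power_mult_distrib)
      qed
      also have "(Cu * x * LM) * (1 / (2^i * (2 powr (s-1))^i * (M * Mp))) = 2 * Cu * LM / Mp * (1 / q) ^ i"
        unfolding x_def q_def using M0p Mp q1 by (simp add: field_simps power_divide)
      finally show ?thesis .
    qed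
    have fin_le: "sum f F \<le> B" if F: "finite F" "F \<subseteq> T" for F
    proof -
      define I where "I = Suc (Max (insert 0 F))"
      have sub: "F \<subseteq> (\<Union>i\<in>{..<I}. Blk i)"
      proof
        fix k assume k: "k \<in> F"
        then have kT: "k \<in> T" using F by auto
        then have kM: "real k \<ge> M" unfolding T_def by simp
        have kI: "k < I" unfolding I_def using F k by (simp add: le_imp_less_Suc)
        obtain j :: nat where j: "real 2^j \<le> real k / M" "real k / M < real 2^(j+1)"
          using nat_power_ivl[of "real k / M" 2] kM M0p by (auto simp: field_simps)
        have j1: "2^j * M \<le> real k" "real k < 2^(j+1) * M" using j M0p by (auto simp: field_simps)
        have "(2::real)^j \<le> real k" using j1 MM(4)
          by (smt (verit, ccfv_SIG) mult_le_cancel_left1 zero_le_power)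
        also have "real k < 2^k"
        proof -
          have "k < 2^k" by (rule less_exp)
          then have "real k < real (2^k)" by (simp only: of_nat_less_iff)
          then show ?thesis by simp
        qed
        finally have "(2::real)^j < 2^k" .
        then have "j < k" by (metis power_strict_increasing_iff one_less_numeral_iff semiring_norm(76))
        then have "j < I" using kI by simp
        then show "k \<in> (\<Union>i\<in>{..<I}. Blk i)" using kT j1 unfolding Blk_def by auto
      qed
      have "sum f F \<le> sum f (\<Union>i\<in>{..<I}. Blk i)"
        by (rule sum_mono2) (use sub finBlk fnn in auto)
      also have "\<dots> = (\<Sum>i<I. sum f (Blk i))"
      proof (rule sum.UNION_disjoint)
        show "\<forall>i\<in>{..<I}. \<forall>j\<in>{..<I}. i \<noteq> j \<longrightarrow> Blk i \<inter> Blk j = {}"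
        proof (intro ballI impI)
          fix i j :: nat assume ij: "i \<noteq> j"
          show "Blk i \<inter> Blk j = {}"
          proof (rule ccontr)
            assume "Blk i \<inter> Blk j \<noteq> {}"
            then obtain k where k: "k \<in> Blk i" "k \<in> Blk j" by blast
            then have "2^i * M < 2^(j+1) * M" "2^j * M < 2^(i+1) * M" unfolding Blk_def by auto
            then have "(2::real)^i < 2^(j+1)" "(2::real)^j < 2^(i+1)" using M0p by auto
            then have "i < j + 1" "j < i + 1" by (auto intro: power_less_imp_less_exp[of "2::real"])
            then show False using ij by simp
          qed
        qed
      qed (use finBlk in auto)
      also have "\<dots> \<le> (\<Sum>i<I. 2 * Cu * LM / Mp * (1 / q) ^ i)" by (rule sum_mono) (rule blk)
      also have "\<dots> = 2 * Cu * LM / Mp * (\<Sum>i<I. (1 / q) ^ i)" by (simp add: sum_distrib_left)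
      also have "(\<Sum>i<I. (1 / q) ^ i) \<le> q / (q - 1)"
      proof -
        have q0: "1 / q \<noteq> 1" "1 / q > 0" "1 / q < 1" using q1 by auto
        have "(\<Sum>i<I. (1 / q) ^ i) = (1 - (1/q)^I) / (1 - 1/q)" using q0 by (simp add: sum_gp_strict)
        also have "\<dots> \<le> 1 / (1 - 1/q)" using q0 by (intro divide_right_mono) auto
        also have "\<dots> = q / (q - 1)" using q1 by (simp add: field_simps)
        finally show ?thesis .
      qed
      then have "2 * Cu * LM / Mp * (\<Sum>i<I. (1 / q) ^ i) \<le> 2 * Cu * LM / Mp * (q / (q - 1))"
        using Cu LM Mp by (intro mult_left_mono) auto
      finally show ?thesis unfolding B_def .
    qed
    have summ: "f summable_on T"
    proof (rule nonneg_bdd_above_summable_on)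
      show "bdd_above (sum f ` {F. F \<subseteq> T \<and> finite F})" using fin_le by (auto intro!: bdd_aboveI)
    qed (use fnn in auto)
    have upper: "infsum f T \<le> B" using summ by (rule infsum_le_finite_sums) (use fin_le in auto)
    define F where "F = {k \<in> T. real k \<le> K * M}"
    have FT: "F \<subseteq> T" unfolding F_def by auto
    have finF: "finite F"
    proof -
      have "F \<subseteq> CntLe l (K * M)" unfolding F_def T_def CntLe_def almost_primes_Om by auto
      then show ?thesis by (rule finite_subset) simp
    qed
    have KM: "K * M \<ge> M" using K1 M0p by simp
    have cover: "CntEq l (K * M) \<subseteq> F \<union> CntLe l M"
      unfolding CntEq_def F_def T_def CntLe_def almost_primes_Om by auto
    have "card (CntEq l (K * M)) \<le> card (F \<union> CntLe l M)" by (rule card_mono[OF _ cover]) (use finF in simp)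
    also have "\<dots> \<le> card F + card (CntLe l M)" by (rule card_Un_le)
    finally have cF0: "real (card (CntEq l (K * M))) \<le> real (card F) + real (card (CntLe l M))" by linarith
    have up0: "real (card (CntLe l M)) \<le> Cu * M * LM" using X1[of M] MM unfolding LM_def by simp
    have lo0: "real (card (CntEq l (K*M))) \<ge> cl * (K*M) * ((ln (ln (K*M))) ^ (l-1) / ln (K*M))"
      using X2[of "K*M"] MM KM by simp
    have LKM: "(ln (ln (K*M))) ^ (l-1) / ln (K*M) \<ge> LM / 2"
    proof -
      have lKM: "ln (K*M) \<ge> ln M" using KM M0p by (subst ln_le_cancel_iff) auto
      have lKM2: "ln (K*M) \<le> 2 * ln M"
      proof -
        have "ln (K*M) = ln K + ln M" using K1 M0p by (simp add: ln_mult)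
        moreover have "ln K \<le> ln M" using K1 MM by (subst ln_le_cancel_iff) auto
        ultimately show ?thesis by simp
      qed
      have "ln (ln (K*M)) \<ge> ln (ln M)" using lKM lM1 by (subst ln_le_cancel_iff) auto
      then have pw: "(ln (ln (K*M))) ^ (l-1) \<ge> (ln (ln M)) ^ (l-1)" using llM by (intro power_mono) auto
      have "LM / 2 = (ln (ln M)) ^ (l-1) / (2 * ln M)" unfolding LM_def by simp
      also have "\<dots> \<le> (ln (ln M)) ^ (l-1) / ln (K*M)"
        using lKM2 lKM lM1 llM by (intro divide_left_mono) auto
      also have "\<dots> \<le> (ln (ln (K*M))) ^ (l-1) / ln (K*M)"
        using pw lKM lM1 by (intro divide_right_mono) auto
      finally show ?thesis .
    qed
    have "real (card F) \<ge> cl * (K*M) * (LM / 2) - Cu * M * LM"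
    proof -
      have "cl * (K*M) * (LM / 2) \<le> cl * (K*M) * ((ln (ln (K*M))) ^ (l-1) / ln (K*M))"
        using LKM cl K1 M0p by (intro mult_left_mono) auto
      then show ?thesis using cF0 up0 lo0 by linarith
    qed
    also have "cl * (K*M) * (LM / 2) - Cu * M * LM = (cl * K / 2 - Cu) * (M * LM)" by (simp add: algebra_simps)
    also have "\<dots> \<ge> 1 * (M * LM)" using clK M0p LM by (intro mult_right_mono) auto
    finally have cF: "real (card F) \<ge> M * LM" by simp
    have "sum f F \<ge> real (card F) * (1 / ((K * M) powr s))"
    proof (rule sum_bounded_below)
      fix k assume k: "k \<in> F"
      then have k1: "real k \<le> K * M" "real k \<ge> M" unfolding F_def T_def by auto
      have pos: "real k powr s > 0" using k1 M0p by simp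
      have pos2: "(K * M) powr s > 0" using K1 M0p by simp
      have le: "real k powr s \<le> (K * M) powr s" using k1 s M0p by (intro powr_mono2) auto
      show "1 / ((K * M) powr s) \<le> f k" unfolding f_def
        by (rule divide_left_mono[OF le]) (simp, rule mult_pos_pos[OF pos2 pos])
    qed
    moreover have "real (card F) * (1 / ((K * M) powr s)) \<ge> (M * LM) * (1 / ((K * M) powr s))"
      using cF by (intro mult_right_mono) auto
    moreover have "(M * LM) * (1 / ((K * M) powr s)) = C1 * LM / Mp"
    proof -
      have "(K * M) powr s = K powr s * (M * Mp)" using K1 M0p Ms by (simp add: powr_mult)
      then show ?thesis unfolding C1_def using M0p Mp K1 by (simp add: field_simps)
    qed
    moreover have "sum f F \<le> infsum f T"
      by (rule finite_sum_le_infsum[OF summ finF FT]) (use fnn in auto)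
    ultimately have lower: "C1 * LM / Mp \<le> infsum f T" by linarith
    have "B = C2 * LM / Mp" unfolding B_def C2_def by (simp add: field_simps)
    then show ?thesis unfolding targ Pt using lower upper by simp
  qed
  have "M0 \<ge> 1" unfolding M0_def by simp
  then show ?thesis using C1 C2 main by blast
qed

end
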